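(* Let $M=(\mathbf{K}^{\mathbf{n}},\rho)$ be a sum-matroid of rank $k=\rho(\mathbf{K}^{\mathbf{n}})$, let $M^*=(\mathbf{K}^{\mathbf{n}},\rho^* )$ be its dual, and let $n=n_1+\cdots+n_\ell$. Let $d_i=d^S_i(M)$ for $i=1,\dots,n-k$ and $d_j^\perp=d^S_j(M^* )$ for $j=1,\dots,k$. Then $$\{1,2,\dots,n\}=\{d_1^\perp,\dots,d_k^\perp\}\cup\{n+1-d_1,\dots,n+1-d_{n-k}\},$$ and the union is disjoint. In particular, the generalized weights of $M$ uniquely determine those of $M^*$.
   Context: $\ell,n_1,\dots,n_\ell$ positive integers, $K_1,\dots,K_\ell$ finite fields. $\mathcal{P}(\mathbf{K}^{\mathbf{n}})=\mathcal{P}(K_1^{n_1})\times\cdots\times\mathcal{P}(K_\ell^{n_\ell})$, $\mathcal{P}(K_i^{n_i})$ the lattice of $K_i$-subspaces of $K_i^{n_i}$, with componentwise inclusion, sum, intersection, and orthogonal complement $\mathcal{L}^\perp$ (w.r.t. the standard bilinear form on each $K_i^{n_i}$); $\mathrm{Rk}(\mathcal{L})=\sum_i\dim_{K_i}\mathcal{L}_i$; $\mathbf{K}^{\mathbf{n}}=(K_1^{n_1},\dots,K_\ell^{n_\ell})$. A sum-matroid is $(\mathbf{K}^{\mathbf{n}},\rho)$ with $\rho:\mathcal{P}(\mathbf{K}^{\mathbf{n}})\to\mathbb{Z}_{\ge0}$ satisfying (R1) $0\le\rho(\mathcal{L})\le\mathrm{Rk}(\mathcal{L})$; (R2) $\mathcal{L}\subseteq\mathcal{L}'\Rightarrow\rho(\mathcal{L})\le\rho(\mathcal{L}')$;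 (R3) $\rho(\mathcal{L}+\mathcal{L}')+\rho(\mathcal{L}\cap\mathcal{L}')\le\rho(\mathcal{L})+\rho(\mathcal{L}')$. The dual $M^*$ has rank function $\rho^*(\mathcal{L})=\rho(\mathcal{L}^\perp)+\mathrm{Rk}(\mathcal{L})-\rho(\mathbf{K}^{\mathbf{n}})$. For a sum-matroid with rank function $\rho$, nullity is $\eta(\mathcal{L})=\mathrm{Rk}(\mathcal{L})-\rho(\mathcal{L})$, and the $i$-th generalized weight is $d^S_i=\min\{\mathrm{Rk}(\mathcal{L}):\mathcal{L}\in\mathcal{P}(\mathbf{K}^{\mathbf{n}}),\ \eta(\mathcal{L})=i\}$ for $i=1,\dots,\eta(\mathbf{K}^{\mathbf{n}})$. *)

theory Defs
  imports "HOL-Algebra.Ring"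
begin

text \<open>A family of finite fields K 0, ..., K (l-1), represented as HOL-Algebra
  field records over a common carrier type, and dimensions ns 0, ..., ns (l-1).
  A vector of K_i^{n_i} is a function v :: nat => 'a with v j in carrier (K i) for j < n_i
  and v j = 0 for j >= n_i.  An element of P(K^n) is a family L :: nat => (nat => 'a) set
  with L i a subspace of K_i^{n_i} for i < l and L i = {} for i >= l (canonical padding).\<close>

definition vecs :: "(nat \<Rightarrow> 'a ring) \<Rightarrow> (nat \<Rightarrow> nat) \<Rightarrow> nat \<Rightarrow> (nat \<Rightarrow> 'a) set" where
  "vecs K ns i = {v. (\<forall>j<ns i. v j \<in> carrier (K i)) \<and> (\<forall>j\<ge>ns i. v j = \<zero>\<^bsub>K i\<^esub>)}"

definition zvec :: "(nat \<Rightarrow> 'a ring) \<Rightarrow> nat \<Rightarrow> (nat \<Rightarrow> 'a)" where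
  "zvec K i = (\<lambda>j. \<zero>\<^bsub>K i\<^esub>)"

definition vadd :: "(nat \<Rightarrow> 'a ring) \<Rightarrow> nat \<Rightarrow> (nat \<Rightarrow> 'a) \<Rightarrow> (nat \<Rightarrow> 'a) \<Rightarrow> (nat \<Rightarrow> 'a)" where
  "vadd K i v w = (\<lambda>j. v j \<oplus>\<^bsub>K i\<^esub> w j)"

definition vsmult :: "(nat \<Rightarrow> 'a ring) \<Rightarrow> nat \<Rightarrow> 'a \<Rightarrow> (nat \<Rightarrow> 'a) \<Rightarrow> (nat \<Rightarrow> 'a)" where
  "vsmult K i c v = (\<lambda>j. c \<otimes>\<^bsub>K i\<^esub> v j)"

definition is_subspace :: "(nat \<Rightarrow> 'a ring) \<Rightarrow> (nat \<Rightarrow> nat) \<Rightarrow> nat \<Rightarrow> (nat \<Rightarrow> 'a) set \<Rightarrow> bool" where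
  "is_subspace K ns i W \<longleftrightarrow> W \<subseteq> vecs K ns i \<and> zvec K i \<in> W \<and>
     (\<forall>v\<in>W. \<forall>w\<in>W. vadd K i v w \<in> W) \<and>
     (\<forall>c\<in>carrier (K i). \<forall>v\<in>W. vsmult K i c v \<in> W)"

definition vspan :: "(nat \<Rightarrow> 'a ring) \<Rightarrow> nat \<Rightarrow> (nat \<Rightarrow> 'a) set \<Rightarrow> (nat \<Rightarrow> 'a) set" where
  "vspan K i B = {v. \<exists>c \<in> B \<rightarrow> carrier (K i). \<forall>j. v j = finsum (K i) (\<lambda>b. c b \<otimes>\<^bsub>K i\<^esub> b j) B}"

definition vdim :: "(nat \<Rightarrow> 'a ring) \<Rightarrow> nat \<Rightarrow> (nat \<Rightarrow> 'a) set \<Rightarrow> nat" where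
  "vdim K i W = (LEAST d. \<exists>B. finite B \<and> B \<subseteq> W \<and> card B = d \<and> vspan K i B = W)"

definition vperp :: "(nat \<Rightarrow> 'a ring) \<Rightarrow> (nat \<Rightarrow> nat) \<Rightarrow> nat \<Rightarrow> (nat \<Rightarrow> 'a) set \<Rightarrow> (nat \<Rightarrow> 'a) set" where
  "vperp K ns i W = {v \<in> vecs K ns i. \<forall>w\<in>W.
      finsum (K i) (\<lambda>j. v j \<otimes>\<^bsub>K i\<^esub> w j) {..<ns i} = \<zero>\<^bsub>K i\<^esub>}"

definition Lat :: "(nat \<Rightarrow> 'a ring) \<Rightarrow> nat \<Rightarrow> (nat \<Rightarrow> nat) \<Rightarrow> (nat \<Rightarrow> (nat \<Rightarrow> 'a) set) set" where
  "Lat K l ns = {L. (\<forall>i<l. is_subspace K ns i (L i)) \<and> (\<forall>i\<ge>l. L i = {})}"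

definition fullspace :: "(nat \<Rightarrow> 'a ring) \<Rightarrow> nat \<Rightarrow> (nat \<Rightarrow> nat) \<Rightarrow> nat \<Rightarrow> (nat \<Rightarrow> 'a) set" where
  "fullspace K l ns = (\<lambda>i. if i < l then vecs K ns i else {})"

definition lsum :: "(nat \<Rightarrow> 'a ring) \<Rightarrow> nat \<Rightarrow> (nat \<Rightarrow> (nat \<Rightarrow> 'a) set) \<Rightarrow> (nat \<Rightarrow> (nat \<Rightarrow> 'a) set) \<Rightarrow> nat \<Rightarrow> (nat \<Rightarrow> 'a) set" where
  "lsum K l L L' = (\<lambda>i. if i < l then {vadd K i v w | v w. v \<in> L i \<and> w \<in> L' i} else {})"

definition linter :: "(nat \<Rightarrow> (nat \<Rightarrow> 'a) set) \<Rightarrow> (nat \<Rightarrow> (nat \<Rightarrow> 'a) set) \<Rightarrow> nat \<Rightarrow> (nat \<Rightarrow> 'a) set" where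
  "linter L L' = (\<lambda>i. L i \<inter> L' i)"

definition lle :: "(nat \<Rightarrow> (nat \<Rightarrow> 'a) set) \<Rightarrow> (nat \<Rightarrow> (nat \<Rightarrow> 'a) set) \<Rightarrow> bool" where
  "lle L L' \<longleftrightarrow> (\<forall>i. L i \<subseteq> L' i)"

definition lperp :: "(nat \<Rightarrow> 'a ring) \<Rightarrow> nat \<Rightarrow> (nat \<Rightarrow> nat) \<Rightarrow> (nat \<Rightarrow> (nat \<Rightarrow> 'a) set) \<Rightarrow> nat \<Rightarrow> (nat \<Rightarrow> 'a) set" where
  "lperp K l ns L = (\<lambda>i. if i < l then vperp K ns i (L i) else {})"

definition Rk :: "(nat \<Rightarrow> 'a ring) \<Rightarrow> nat \<Rightarrow> (nat \<Rightarrow> (nat \<Rightarrow> 'a) set) \<Rightarrow> nat" where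
  "Rk K l L = (\<Sum>i<l. vdim K i (L i))"

text \<open>Sum-matroid axioms (R1)-(R3); nonnegativity is automatic for nat values.\<close>
definition sum_matroid :: "(nat \<Rightarrow> 'a ring) \<Rightarrow> nat \<Rightarrow> (nat \<Rightarrow> nat) \<Rightarrow> ((nat \<Rightarrow> (nat \<Rightarrow> 'a) set) \<Rightarrow> nat) \<Rightarrow> bool" where
  "sum_matroid K l ns \<rho> \<longleftrightarrow>
     (\<forall>L\<in>Lat K l ns. \<rho> L \<le> Rk K l L) \<and>
     (\<forall>L\<in>Lat K l ns. \<forall>L'\<in>Lat K l ns. lle L L' \<longrightarrow> \<rho> L \<le> \<rho> L') \<and>
     (\<forall>L\<in>Lat K l ns. \<forall>L'\<in>Lat K l ns.
        \<rho> (lsum K l L L') + \<rho> (linter L L') \<le> \<rho> L + \<rho> L')"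

text \<open>Dual rank function (the value is always nonnegative for a sum-matroid, so nat
  subtraction does not truncate).\<close>
definition dual_rank :: "(nat \<Rightarrow> 'a ring) \<Rightarrow> nat \<Rightarrow> (nat \<Rightarrow> nat) \<Rightarrow> ((nat \<Rightarrow> (nat \<Rightarrow> 'a) set) \<Rightarrow> nat)
    \<Rightarrow> (nat \<Rightarrow> (nat \<Rightarrow> 'a) set) \<Rightarrow> nat" where
  "dual_rank K l ns \<rho> L = \<rho> (lperp K l ns L) + Rk K l L - \<rho> (fullspace K l ns)"

definition nullity :: "(nat \<Rightarrow> 'a ring) \<Rightarrow> nat \<Rightarrow> ((nat \<Rightarrow> (nat \<Rightarrow> 'a) set) \<Rightarrow> nat)
    \<Rightarrow> (nat \<Rightarrow> (nat \<Rightarrow> 'a) set) \<Rightarrow> nat" where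
  "nullity K l \<rho> L = Rk K l L - \<rho> L"

definition gen_weight :: "(nat \<Rightarrow> 'a ring) \<Rightarrow> nat \<Rightarrow> (nat \<Rightarrow> nat) \<Rightarrow> ((nat \<Rightarrow> (nat \<Rightarrow> 'a) set) \<Rightarrow> nat)
    \<Rightarrow> nat \<Rightarrow> nat" where
  "gen_weight K l ns \<rho> i = Min {Rk K l L | L. L \<in> Lat K l ns \<and> nullity K l \<rho> L = i}"

end

theory Submission
  imports Defs "Jordan_Normal_Form.Missing_VectorSpace"
begin

definition VV :: "'a ring \<Rightarrow> nat \<Rightarrow> ('a, nat \<Rightarrow> 'a) module" where
"VV F m = \<lparr>carrier = {v. (\<forall>j<m. v j \<in> carrier F) \<and> (\<forall>j\<ge>m. v j = \<zero>\<^bsub>F\<^esub>)},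
   mult = (\<lambda>_ _. (\<lambda>j. \<zero>\<^bsub>F\<^esub>)), one = (\<lambda>j. \<zero>\<^bsub>F\<^esub>), zero = (\<lambda>j. \<zero>\<^bsub>F\<^esub>),
   add = (\<lambda>v w j. v j \<oplus>\<^bsub>F\<^esub> w j), smult = (\<lambda>c v j. c \<otimes>\<^bsub>F\<^esub> v j)\<rparr>"

lemma VV_carrier:
  "carrier (VV F m) = {v. (\<forall>j<m. v j \<in> carrier F) \<and> (\<forall>j\<ge>m. v j = \<zero>\<^bsub>F\<^esub>)}"
  by (simp add: VV_def)

lemma VV_simps[simp]:
  "zero (VV F m) = (\<lambda>j. \<zero>\<^bsub>F\<^esub>)"
  "add (VV F m) = (\<lambda>v w j. v j \<oplus>\<^bsub>F\<^esub> w j)"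
  "smult (VV F m) = (\<lambda>c v j. c \<otimes>\<^bsub>F\<^esub> v j)"
  by (simp_all add: VV_def)

lemma VV_carrier_F: "field F \<Longrightarrow> v \<in> carrier (VV F m) \<Longrightarrow> v j \<in> carrier F"
proof -
  assume "field F" "v \<in> carrier (VV F m)"
  then interpret field F + X: field F by simp_all
  show ?thesis using \<open>v \<in> carrier (VV F m)\<close> by (cases "j < m") (auto simp: VV_carrier)
qed

lemma VV_vs: assumes "field F" shows "vectorspace F (VV F m)"
proof -
  interpret F: field F by fact
  note cF = VV_carrier_F[OF assms]
  show ?thesis
  proof (rule vs_criteria)
    show "field F" by fact
    show "\<forall>v\<in>carrier (VV F m). \<exists>neg_v\<in>carrier (VV F m). v \<oplus>\<^bsub>VV F m\<^esub> neg_v = \<zero>\<^bsub>VV F m\<^esub>"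
    proof
      fix v assume v: "v \<in> carrier (VV F m)"
      have "(\<lambda>j. \<ominus>\<^bsub>F\<^esub> v j) \<in> carrier (VV F m)" using v by (auto simp: VV_carrier)
      moreover have "v \<oplus>\<^bsub>VV F m\<^esub> (\<lambda>j. \<ominus>\<^bsub>F\<^esub> v j) = \<zero>\<^bsub>VV F m\<^esub>"
        using cF[OF v] by (simp add: F.r_neg)
      ultimately show "\<exists>neg_v\<in>carrier (VV F m). v \<oplus>\<^bsub>VV F m\<^esub> neg_v = \<zero>\<^bsub>VV F m\<^esub>" by blast
    qed
    show "\<zero>\<^bsub>VV F m\<^esub> \<in> carrier (VV F m)" by (simp add: VV_carrier)
    show "\<forall>v w. v \<in> carrier (VV F m) \<and> w \<in> carrier (VV F m) \<longrightarrow> v \<oplus>\<^bsub>VV F m\<^esub> w \<in> carrier (VV F m)"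
      by (simp add: VV_carrier)
    show "\<forall>c v. c \<in> carrier F \<and> v \<in> carrier (VV F m) \<longrightarrow> c \<odot>\<^bsub>VV F m\<^esub> v \<in> carrier (VV F m)"
      by (simp add: VV_carrier)
    show "\<forall>v w. v \<in> carrier (VV F m) \<and> w \<in> carrier (VV F m) \<longrightarrow> v \<oplus>\<^bsub>VV F m\<^esub> w = w \<oplus>\<^bsub>VV F m\<^esub> v"
      using cF by (auto intro!: ext F.a_comm)
    show "\<forall>v w x. v \<in> carrier (VV F m) \<and> w \<in> carrier (VV F m) \<and> x \<in> carrier (VV F m) \<longrightarrow>
        v \<oplus>\<^bsub>VV F m\<^esub> w \<oplus>\<^bsub>VV F m\<^esub> x = v \<oplus>\<^bsub>VV F m\<^esub> (w \<oplus>\<^bsub>VV F m\<^esub> x)"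
      using cF by (auto intro!: ext F.a_assoc)
    show "\<forall>v\<in>carrier (VV F m). v \<oplus>\<^bsub>VV F m\<^esub> \<zero>\<^bsub>VV F m\<^esub> = v"
      using cF by (auto intro!: ext)
    show "\<forall>a b v. a \<in> carrier F \<and> b \<in> carrier F \<and> v \<in> carrier (VV F m) \<longrightarrow>
        a \<otimes>\<^bsub>F\<^esub> b \<odot>\<^bsub>VV F m\<^esub> v = a \<odot>\<^bsub>VV F m\<^esub> (b \<odot>\<^bsub>VV F m\<^esub> v)"
      using cF by (auto intro!: ext F.m_assoc)
    show "\<forall>v\<in>carrier (VV F m). \<one>\<^bsub>F\<^esub> \<odot>\<^bsub>VV F m\<^esub> v = v"
      using cF by (auto intro!: ext)
    show "\<forall>a b v. a \<in> carrier F \<and> b \<in> carrier F \<and> v \<in> carrier (VV F m) \<longrightarrow>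
        (a \<oplus>\<^bsub>F\<^esub> b) \<odot>\<^bsub>VV F m\<^esub> v = a \<odot>\<^bsub>VV F m\<^esub> v \<oplus>\<^bsub>VV F m\<^esub> b \<odot>\<^bsub>VV F m\<^esub> v"
      using cF by (auto intro!: ext F.l_distr)
    show "\<forall>a v w. a \<in> carrier F \<and> v \<in> carrier (VV F m) \<and> w \<in> carrier (VV F m) \<longrightarrow>
        a \<odot>\<^bsub>VV F m\<^esub> (v \<oplus>\<^bsub>VV F m\<^esub> w) = a \<odot>\<^bsub>VV F m\<^esub> v \<oplus>\<^bsub>VV F m\<^esub> a \<odot>\<^bsub>VV F m\<^esub> w"
      using cF by (auto intro!: ext F.r_distr)
  qed
qed


locale fvs =
  fixes F :: "'a ring" and m :: nat
  assumes fld: "field F"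
begin

sublocale vs: vectorspace F "VV F m" by (rule VV_vs[OF fld])

lemma cF: "v \<in> carrier (VV F m) \<Longrightarrow> v j \<in> carrier F"
  by (rule VV_carrier_F[OF fld])

lemma lincomb_eval:
  assumes "finite B" "B \<subseteq> carrier (VV F m)" "c \<in> B \<rightarrow> carrier F"
  shows "vs.lincomb c B j = finsum F (\<lambda>b. c b \<otimes>\<^bsub>F\<^esub> b j) B"
  using assms
proof (induct B rule: finite_induct)
  case empty
  then show ?case by simp
next
  case (insert x B)
  have "vs.lincomb c (B \<union> {x}) = c x \<odot>\<^bsub>VV F m\<^esub> x \<oplus>\<^bsub>VV F m\<^esub> vs.lincomb c B"
    using insert by (intro vs.lincomb_insert) auto
  then have "vs.lincomb c (insert x B) j = c x \<otimes>\<^bsub>F\<^esub> x j \<oplus>\<^bsub>F\<^esub> vs.lincomb c B j"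
    by simp
  also have "\<dots> = c x \<otimes>\<^bsub>F\<^esub> x j \<oplus>\<^bsub>F\<^esub> finsum F (\<lambda>b. c b \<otimes>\<^bsub>F\<^esub> b j) B"
    using insert by simp
  also have "\<dots> = finsum F (\<lambda>b. c b \<otimes>\<^bsub>F\<^esub> b j) (insert x B)"
  proof -
    have cx: "c x \<in> carrier F" "c \<in> B \<rightarrow> carrier F" using insert(5) by auto
    have xc: "x \<in> carrier (VV F m)" "B \<subseteq> carrier (VV F m)" using insert(4) by auto
    have P: "(\<lambda>b. c b \<otimes>\<^bsub>F\<^esub> b j) \<in> B \<rightarrow> carrier F"
    proof
      fix b assume "b \<in> B"
      show "c b \<otimes>\<^bsub>F\<^esub> b j \<in> carrier F"
        by (rule vs.R.m_closed[OF funcset_mem[OF cx(2) \<open>b \<in> B\<close>] cF[OF subsetD[OF xc(2) \<open>b \<in> B\<close>]]])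
    qed
    have "c x \<otimes>\<^bsub>F\<^esub> x j \<in> carrier F" by (rule vs.R.m_closed[OF cx(1) cF[OF xc(1)]])
    then show ?thesis using vs.R.finsum_insert[OF insert(1) insert(2) P] by simp
  qed
  finally show ?case .
qed

end

context fvs
begin

lemma cF_simp[simp]: "v \<in> carrier (VV F m) \<Longrightarrow> v j \<in> carrier F"
  by (rule cF)

lemma lincomb_eval_fun:
  assumes "finite B" "B \<subseteq> carrier (VV F m)" "c \<in> B \<rightarrow> carrier F"
  shows "vs.lincomb c B = (\<lambda>j. finsum F (\<lambda>b. c b \<otimes>\<^bsub>F\<^esub> b j) B)"
  using lincomb_eval[OF assms] by (intro ext) simp

definition vsp :: "(nat \<Rightarrow> 'a) set \<Rightarrow> (nat \<Rightarrow> 'a) set" where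
  "vsp B = {v. \<exists>c \<in> B \<rightarrow> carrier F. \<forall>j. v j = finsum F (\<lambda>b. c b \<otimes>\<^bsub>F\<^esub> b j) B}"

lemma vsp_span:
  assumes "finite B" "B \<subseteq> carrier (VV F m)"
  shows "vsp B = vs.span B"
proof -
  have "vsp B = {vs.lincomb c B | c. c \<in> B \<rightarrow> carrier F}"
  proof (intro equalityI subsetI)
    fix v assume "v \<in> vsp B"
    then obtain c where c: "c \<in> B \<rightarrow> carrier F" "\<forall>j. v j = finsum F (\<lambda>b. c b \<otimes>\<^bsub>F\<^esub> b j) B"
      unfolding vsp_def by blast
    then have "v = vs.lincomb c B" using lincomb_eval_fun[OF assms c(1)] by (intro ext) simp
    then show "v \<in> {vs.lincomb c B | c. c \<in> B \<rightarrow> carrier F}" using c(1) by blast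
  next
    fix v assume "v \<in> {vs.lincomb c B | c. c \<in> B \<rightarrow> carrier F}"
    then obtain c where c: "c \<in> B \<rightarrow> carrier F" "v = vs.lincomb c B" by blast
    then show "v \<in> vsp B" unfolding vsp_def using lincomb_eval[OF assms c(1)] by blast
  qed
  then show ?thesis using vs.finite_span[OF assms] by simp
qed

definition isub :: "(nat \<Rightarrow> 'a) set \<Rightarrow> bool" where
  "isub W \<longleftrightarrow> W \<subseteq> carrier (VV F m) \<and> (\<lambda>j. \<zero>\<^bsub>F\<^esub>) \<in> W \<and>
     (\<forall>v\<in>W. \<forall>w\<in>W. (\<lambda>j. v j \<oplus>\<^bsub>F\<^esub> w j) \<in> W) \<and>
     (\<forall>c\<in>carrier F. \<forall>v\<in>W. (\<lambda>j. c \<otimes>\<^bsub>F\<^esub> v j) \<in> W)"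

lemma isub_submodule:
  assumes "isub W" shows "submodule F W (VV F m)"
proof (rule submodule.intro)
  show "module F (VV F m)" by (rule vs.module_axioms)
qed (use assms in \<open>simp_all add: isub_def\<close>)

lemma submodule_isub:
  assumes "submodule F W (VV F m)" shows "isub W"
proof -
  have "\<zero>\<^bsub>VV F m\<^esub> \<in> W" using submodule.zero_closed[OF assms] .
  moreover have "\<And>v w. v \<in> W \<Longrightarrow> w \<in> W \<Longrightarrow> v \<oplus>\<^bsub>VV F m\<^esub> w \<in> W"
    using submodule.m_closed[OF assms] .
  moreover have "\<And>c v. c \<in> carrier F \<Longrightarrow> v \<in> W \<Longrightarrow> c \<odot>\<^bsub>VV F m\<^esub> v \<in> W"
    using submodule.smult_closed[OF assms] .
  ultimately show ?thesis unfolding isub_def using submodule.subset[OF assms] by simp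
qed

lemma span_isub: "B \<subseteq> carrier (VV F m) \<Longrightarrow> isub (vs.span B)"
  by (rule submodule_isub[OF vs.span_is_submodule])

lemma isub_carrier: "isub (carrier (VV F m))"
proof -
  have "\<zero>\<^bsub>VV F m\<^esub> \<in> carrier (VV F m)" by (rule vs.M.zero_closed)
  moreover have "\<And>v w. v \<in> carrier (VV F m) \<Longrightarrow> w \<in> carrier (VV F m) \<Longrightarrow> v \<oplus>\<^bsub>VV F m\<^esub> w \<in> carrier (VV F m)"
    by (rule vs.M.a_closed)
  moreover have "\<And>c v. c \<in> carrier F \<Longrightarrow> v \<in> carrier (VV F m) \<Longrightarrow> c \<odot>\<^bsub>VV F m\<^esub> v \<in> carrier (VV F m)"
    by (rule vs.smult_closed)
  ultimately show ?thesis unfolding isub_def by simp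
qed

end

context fvs
begin

definition ee :: "nat \<Rightarrow> nat \<Rightarrow> 'a" where
  "ee k = (\<lambda>j. if j = k then \<one>\<^bsub>F\<^esub> else \<zero>\<^bsub>F\<^esub>)"

definition EE :: "nat \<Rightarrow> (nat \<Rightarrow> 'a) set" where
  "EE d = ee ` {..<d}"

definition CC :: "nat \<Rightarrow> (nat \<Rightarrow> 'a) set" where
  "CC d = {v \<in> carrier (VV F m). \<forall>j\<ge>d. v j = \<zero>\<^bsub>F\<^esub>}"

lemma ee_carrier: "k < m \<Longrightarrow> ee k \<in> carrier (VV F m)"
  unfolding VV_carrier ee_def by (auto simp del: cF_simp)

lemma EE_carrier: "d \<le> m \<Longrightarrow> EE d \<subseteq> carrier (VV F m)"
  unfolding EE_def using ee_carrier by auto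

lemma ee_inj: "inj_on ee A"
proof (rule inj_onI)
  fix a b assume "ee a = ee b"
  then have "ee a a = ee b a" by simp
  then show "a = b" unfolding ee_def using vs.one_not_zero by (auto split: if_splits)
qed

lemma card_EE: "card (EE d) = d"
  unfolding EE_def using ee_inj card_image by (metis card_lessThan)

lemma finite_EE: "finite (EE d)"
  unfolding EE_def by simp

lemma lc_EE:
  assumes "d \<le> m" "c \<in> EE d \<rightarrow> carrier F"
  shows "vs.lincomb c (EE d) = (\<lambda>j. if j < d then c (ee j) else \<zero>\<^bsub>F\<^esub>)"
proof (rule ext)
  fix j
  have cc: "\<And>k. k < d \<Longrightarrow> c (ee k) \<in> carrier F" using assms(2) unfolding EE_def by auto
  have "vs.lincomb c (EE d) j = finsum F (\<lambda>b. c b \<otimes>\<^bsub>F\<^esub> b j) (ee ` {..<d})"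
    using lincomb_eval[OF finite_EE EE_carrier[OF assms(1)] assms(2)] unfolding EE_def .
  also have "\<dots> = finsum F (\<lambda>k. c (ee k) \<otimes>\<^bsub>F\<^esub> ee k j) {..<d}"
  proof (rule vs.R.finsum_reindex)
    show "(\<lambda>b. c b \<otimes>\<^bsub>F\<^esub> b j) \<in> ee ` {..<d} \<rightarrow> carrier F"
    proof
      fix b assume "b \<in> ee ` {..<d}"
      then obtain k where k: "k < d" "b = ee k" by auto
      have "ee k \<in> carrier (VV F m)" using k assms(1) ee_carrier by simp
      then show "c b \<otimes>\<^bsub>F\<^esub> b j \<in> carrier F" using k cc[OF k(1)] cF by simp
    qed
    show "inj_on ee {..<d}" by (rule ee_inj)
  qed
  also have "\<dots> = finsum F (\<lambda>k. if j = k then c (ee k) else \<zero>\<^bsub>F\<^esub>) {..<d}"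
  proof (rule vs.R.finsum_cong')
    show "(\<lambda>k. if j = k then c (ee k) else \<zero>\<^bsub>F\<^esub>) \<in> {..<d} \<rightarrow> carrier F"
      using cc by simp
    fix k assume "k \<in> {..<d}"
    then show "c (ee k) \<otimes>\<^bsub>F\<^esub> ee k j = (if j = k then c (ee k) else \<zero>\<^bsub>F\<^esub>)"
      using cc[of k] unfolding ee_def by simp
  qed simp
  also have "\<dots> = (if j < d then c (ee j) else \<zero>\<^bsub>F\<^esub>)"
  proof (cases "j < d")
    case True
    have "finsum F (\<lambda>k. if j = k then c (ee k) else \<zero>\<^bsub>F\<^esub>) {..<d} = c (ee j)"
      by (rule vs.R.add.finprod_singleton) (use True cc in auto)
    then show ?thesis using True by simp
  next
    case False
    have "finsum F (\<lambda>k. if j = k then c (ee k) else \<zero>\<^bsub>F\<^esub>) {..<d} = finsum F (\<lambda>k. \<zero>\<^bsub>F\<^esub>) {..<d}"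
      by (rule vs.R.finsum_cong') (use False in auto)
    then show ?thesis using False by simp
  qed
  finally show "vs.lincomb c (EE d) j = (if j < d then c (ee j) else \<zero>\<^bsub>F\<^esub>)" .
qed

lemma EE_indep:
  assumes "d \<le> m" shows "vs.lin_indpt (EE d)"
proof (rule vs.finite_lin_indpt2[OF finite_EE EE_carrier[OF assms]])
  fix a assume a: "a \<in> EE d \<rightarrow> carrier F" "vs.lincomb a (EE d) = \<zero>\<^bsub>VV F m\<^esub>"
  show "\<forall>v\<in>EE d. a v = \<zero>\<^bsub>F\<^esub>"
  proof
    fix v assume "v \<in> EE d"
    then obtain k where k: "k < d" "v = ee k" unfolding EE_def by auto
    have "vs.lincomb a (EE d) k = \<zero>\<^bsub>F\<^esub>" using a(2) by simp
    then show "a v = \<zero>\<^bsub>F\<^esub>" using lc_EE[OF assms a(1)] k by simp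
  qed
qed

lemma EE_span:
  assumes "d \<le> m" shows "vs.span (EE d) = CC d"
proof -
  have sp: "vs.span (EE d) = {vs.lincomb a (EE d) | a. a \<in> EE d \<rightarrow> carrier F}"
    by (rule vs.finite_span[OF finite_EE EE_carrier[OF assms]])
  show ?thesis
  proof (intro equalityI subsetI)
    fix v assume "v \<in> vs.span (EE d)"
    then obtain a where a: "a \<in> EE d \<rightarrow> carrier F" "v = vs.lincomb a (EE d)" using sp by auto
    have "v \<in> carrier (VV F m)" using a vs.lincomb_closed[OF EE_carrier[OF assms] a(1)] by simp
    moreover have "\<forall>j\<ge>d. v j = \<zero>\<^bsub>F\<^esub>" using lc_EE[OF assms a(1)] a(2) by simp
    ultimately show "v \<in> CC d" unfolding CC_def by simp
  next
    fix v assume v: "v \<in> CC d"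
    define a where "a = (\<lambda>b. v (inv_into {..<d} ee b))"
    have inv: "\<And>k. k < d \<Longrightarrow> inv_into {..<d} ee (ee k) = k"
      using ee_inj by (simp add: inv_into_f_f)
    have vc: "v \<in> carrier (VV F m)" using v unfolding CC_def by simp
    have a: "a \<in> EE d \<rightarrow> carrier F"
      unfolding EE_def a_def using vc cF by auto
    have "vs.lincomb a (EE d) = v"
    proof
      fix j
      show "vs.lincomb a (EE d) j = v j"
        using lc_EE[OF assms a] inv v unfolding a_def CC_def by simp
    qed
    then show "v \<in> vs.span (EE d)" using sp a by blast
  qed
qed

lemma CC_m: "CC m = carrier (VV F m)"
  unfolding CC_def VV_carrier by (auto simp del: cF_simp)

lemma dim_V: "vs.dim = m"
proof -
  have sp: "vs.span (EE m) = carrier (VV F m)" using EE_span[of m] CC_m by simp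
  have "vs.basis (EE m)"
    unfolding vs.basis_def using EE_indep[of m] sp EE_carrier[of m] by simp
  then have "vs.dim = card (EE m)" by (rule vs.dim_basis[OF finite_EE])
  then show ?thesis using card_EE by simp
qed

lemma fin_dim_V: "vs.fin_dim"
proof -
  have sp: "vs.span (EE m) = carrier (VV F m)" using EE_span[of m] CC_m by simp
  show ?thesis unfolding vs.fin_dim_def using sp EE_carrier[of m] finite_EE[of m] by (intro exI[of _ "EE m"]) simp
qed

lemma indep_fin:
  assumes "B \<subseteq> carrier (VV F m)" "vs.lin_indpt B"
  shows "finite B" "card B \<le> m"
  using vs.li_le_dim[OF fin_dim_V assms] dim_V by simp_all

lemma indep_le:
  assumes "B \<subseteq> carrier (VV F m)" "vs.lin_indpt B" "finite C" "C \<subseteq> carrier (VV F m)"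
    "B \<subseteq> vs.span C"
  shows "card B \<le> card C"
proof -
  obtain D :: "(nat \<Rightarrow> 'a) set" where "int (card D) \<le> int (card C) - int (card B)"
    using vs.replacement[OF indep_fin(1)[OF assms(1,2)] assms(3,4,2,5)] by blast
  then show ?thesis by simp
qed

lemma indep_insert:
  assumes "B \<subseteq> carrier (VV F m)" "vs.lin_indpt B" "v \<in> carrier (VV F m)" "v \<notin> vs.span B"
  shows "vs.lin_indpt (insert v B)"
proof -
  have "v \<notin> B" using assms(4) vs.in_own_span[OF assms(1)] by blast
  then have "v \<in> vs.span B \<longleftrightarrow> vs.lin_dep (B \<union> {v})"
    by (rule vs.lin_dep_iff_in_span[OF assms(1,2,3)])
  then show ?thesis using assms(4) by simp
qed

end

context fvs
begin

lemma isub_sub: "isub W \<Longrightarrow> W \<subseteq> carrier (VV F m)"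
  unfolding isub_def by simp

lemma basis_ext:
  assumes W: "isub W" and B0: "B0 \<subseteq> W" "vs.lin_indpt B0"
  shows "\<exists>B. B0 \<subseteq> B \<and> B \<subseteq> W \<and> finite B \<and> vs.lin_indpt B \<and> vs.span B = W"
proof -
  let ?P = "\<lambda>S. B0 \<subseteq> S \<and> S \<subseteq> W \<and> vs.lin_indpt S"
  have Wc: "W \<subseteq> carrier (VV F m)" using W by (rule isub_sub)
  have maxc: "\<And>A. ?P A \<Longrightarrow> finite A \<and> card A \<le> m"
  proof -
    fix A assume "?P A"
    then have "A \<subseteq> carrier (VV F m)" "vs.lin_indpt A" using Wc by auto
    then show "finite A \<and> card A \<le> m" using indep_fin by simp
  qed
  have "?P B0" using B0 by simp
  then obtain A where A: "finite A" "maximal A ?P"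
    using maximal_exists[of ?P m B0, OF maxc] by blast
  have PA: "?P A" using A(2) unfolding maximal_def by simp
  have Ac: "A \<subseteq> carrier (VV F m)" using PA Wc by auto
  have sub1: "vs.span A \<subseteq> W"
    using vs.span_is_subset[OF _ isub_submodule[OF W]] PA by simp
  have sub2: "W \<subseteq> vs.span A"
  proof
    fix w assume w: "w \<in> W"
    show "w \<in> vs.span A"
    proof (rule ccontr)
      assume nw: "w \<notin> vs.span A"
      have wc: "w \<in> carrier (VV F m)" using w Wc by auto
      have "vs.lin_indpt (insert w A)" using indep_insert[OF Ac _ wc nw] PA by simp
      then have "?P (insert w A)" using PA w by auto
      then have "insert w A = A" using A(2) unfolding maximal_def by blast
      then have "w \<in> A" by auto
      then show False using nw vs.in_own_span[OF Ac] by auto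
    qed
  qed
  show ?thesis using PA A(1) sub1 sub2 by blast
qed

lemma basis_exists:
  assumes W: "isub W"
  shows "\<exists>B. B \<subseteq> W \<and> finite B \<and> vs.lin_indpt B \<and> vs.span B = W"
proof -
  have "vs.lin_indpt {}"
    by (rule vs.finite_lin_indpt2) simp_all
  then show ?thesis using basis_ext[OF W, of "{}"] by blast
qed

definition vd :: "(nat \<Rightarrow> 'a) set \<Rightarrow> nat" where
  "vd W = (LEAST d. \<exists>B. finite B \<and> B \<subseteq> W \<and> card B = d \<and> vsp B = W)"

lemma vd_basis:
  assumes Bc: "B \<subseteq> carrier (VV F m)" and fB: "finite B" and iB: "vs.lin_indpt B"
  shows "vd (vs.span B) = card B"
  unfolding vd_def
proof (rule Least_equality)
  show "\<exists>C. finite C \<and> C \<subseteq> vs.span B \<and> card C = card B \<and> vsp C = vs.span B"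
    using vs.in_own_span[OF Bc] vsp_span[OF fB Bc] fB by blast
next
  fix d assume "\<exists>C. finite C \<and> C \<subseteq> vs.span B \<and> card C = d \<and> vsp C = vs.span B"
  then obtain C where C: "finite C" "C \<subseteq> vs.span B" "card C = d" "vsp C = vs.span B" by blast
  have Cc: "C \<subseteq> carrier (VV F m)" using C(2) vs.span_is_subset2[OF Bc] by blast
  have "vs.span C = vs.span B" using C(4) vsp_span[OF C(1) Cc] by simp
  then have "B \<subseteq> vs.span C" using vs.in_own_span[OF Bc] by simp
  then have "card B \<le> card C" by (rule indep_le[OF Bc iB C(1) Cc])
  then show "card B \<le> d" using C(3) by simp
qed

lemma isub_vd:
  assumes "isub W"
  obtains B where "B \<subseteq> W" "finite B" "vs.lin_indpt B" "vs.span B = W" "vd W = card B"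
proof -
  obtain B where B: "B \<subseteq> W" "finite B" "vs.lin_indpt B" "vs.span B = W"
    using basis_exists[OF assms] by blast
  have "B \<subseteq> carrier (VV F m)" using B(1) isub_sub[OF assms] by blast
  then have "vd W = card B" using vd_basis[OF _ B(2,3)] B(4) by simp
  then show ?thesis using that B by blast
qed

lemma vd_le: assumes "isub W" shows "vd W \<le> m"
proof -
  obtain B where B: "B \<subseteq> W" "finite B" "vs.lin_indpt B" "vs.span B = W" "vd W = card B"
    using isub_vd[OF assms] by blast
  have "B \<subseteq> carrier (VV F m)" using B(1) isub_sub[OF assms] by blast
  then show ?thesis using indep_fin(2)[OF _ B(3)] B(5) by simp
qed

lemma vd_carrier: "vd (carrier (VV F m)) = m"
proof -
  have sp: "vs.span (EE m) = carrier (VV F m)" using EE_span[of m] CC_m by simp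
  show ?thesis using vd_basis[OF EE_carrier[of m] finite_EE EE_indep[of m]] sp card_EE by simp
qed

lemma vd_eq:
  assumes W: "isub W" and W': "isub W'" and sub: "W \<subseteq> W'" and le: "vd W' \<le> vd W"
  shows "W = W'"
proof (rule ccontr)
  assume ne: "W \<noteq> W'"
  then obtain w where w: "w \<in> W'" "w \<notin> W" using sub by blast
  obtain B where B: "B \<subseteq> W" "finite B" "vs.lin_indpt B" "vs.span B = W" "vd W = card B"
    using isub_vd[OF W] by blast
  obtain B' where B': "B' \<subseteq> W'" "finite B'" "vs.lin_indpt B'" "vs.span B' = W'" "vd W' = card B'"
    using isub_vd[OF W'] by blast
  have Bc: "B \<subseteq> carrier (VV F m)" using B(1) isub_sub[OF W] by blast
  have B'c: "B' \<subseteq> carrier (VV F m)" using B'(1) isub_sub[OF W'] by blast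
  have wc: "w \<in> carrier (VV F m)" using w(1) isub_sub[OF W'] by blast
  have i: "vs.lin_indpt (insert w B)" using indep_insert[OF Bc B(3) wc] w(2) B(4) by simp
  have "insert w B \<subseteq> vs.span B'" using B'(4) w(1) B(1) sub by blast
  then have "card (insert w B) \<le> card B'"
    using indep_le[OF _ i B'(2) B'c] Bc wc by blast
  moreover have "card (insert w B) = card B + 1"
  proof -
    have "w \<notin> B" using w(2) B(1) by blast
    then show ?thesis using B(2) by simp
  qed
  ultimately show False using le B(5) B'(5) by simp
qed

end

context fvs
begin

lemma zero_VV[simp]: "(\<lambda>j. \<zero>\<^bsub>F\<^esub>) \<in> carrier (VV F m)"
  using vs.M.zero_closed by simp

lemma add_VV[simp]: "v \<in> carrier (VV F m) \<Longrightarrow> w \<in> carrier (VV F m) \<Longrightarrow> (\<lambda>j. v j \<oplus>\<^bsub>F\<^esub> w j) \<in> carrier (VV F m)"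
  using vs.M.a_closed[of v w] by simp

lemma smult_VV[simp]: "c \<in> carrier F \<Longrightarrow> v \<in> carrier (VV F m) \<Longrightarrow> (\<lambda>j. c \<otimes>\<^bsub>F\<^esub> v j) \<in> carrier (VV F m)"
  using vs.smult_closed[of c v] by simp

definition ip :: "(nat \<Rightarrow> 'a) \<Rightarrow> (nat \<Rightarrow> 'a) \<Rightarrow> 'a" where
  "ip v w = finsum F (\<lambda>j. v j \<otimes>\<^bsub>F\<^esub> w j) {..<m}"

definition perp :: "(nat \<Rightarrow> 'a) set \<Rightarrow> (nat \<Rightarrow> 'a) set" where
  "perp W = {v \<in> carrier (VV F m). \<forall>w\<in>W. ip v w = \<zero>\<^bsub>F\<^esub>}"

lemma prod_Pi: "v \<in> carrier (VV F m) \<Longrightarrow> w \<in> carrier (VV F m) \<Longrightarrow>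
    (\<lambda>j. v j \<otimes>\<^bsub>F\<^esub> w j) \<in> A \<rightarrow> carrier F"
  by (intro Pi_I vs.R.m_closed cF)

lemma ip_carrier: "v \<in> carrier (VV F m) \<Longrightarrow> w \<in> carrier (VV F m) \<Longrightarrow> ip v w \<in> carrier F"
  unfolding ip_def by (rule vs.R.finsum_closed[OF prod_Pi])

lemma ip_comm: assumes "v \<in> carrier (VV F m)" "w \<in> carrier (VV F m)" shows "ip v w = ip w v"
  unfolding ip_def
proof (rule vs.R.finsum_cong')
  show "(\<lambda>j. w j \<otimes>\<^bsub>F\<^esub> v j) \<in> {..<m} \<rightarrow> carrier F" by (rule prod_Pi[OF assms(2,1)])
  fix j show "v j \<otimes>\<^bsub>F\<^esub> w j = w j \<otimes>\<^bsub>F\<^esub> v j" by (rule vs.R.m_comm[OF cF[OF assms(1)] cF[OF assms(2)]])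
qed simp

lemma ip_add: assumes "v \<in> carrier (VV F m)" "v' \<in> carrier (VV F m)" "w \<in> carrier (VV F m)"
  shows "ip (v \<oplus>\<^bsub>VV F m\<^esub> v') w = ip v w \<oplus>\<^bsub>F\<^esub> ip v' w"
proof -
  have "ip (v \<oplus>\<^bsub>VV F m\<^esub> v') w = finsum F (\<lambda>j. v j \<otimes>\<^bsub>F\<^esub> w j \<oplus>\<^bsub>F\<^esub> v' j \<otimes>\<^bsub>F\<^esub> w j) {..<m}"
    unfolding ip_def
  proof (rule vs.R.finsum_cong')
    show "(\<lambda>j. v j \<otimes>\<^bsub>F\<^esub> w j \<oplus>\<^bsub>F\<^esub> v' j \<otimes>\<^bsub>F\<^esub> w j) \<in> {..<m} \<rightarrow> carrier F"
      using assms by (intro Pi_I vs.R.a_closed vs.R.m_closed cF)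
    fix j show "(v \<oplus>\<^bsub>VV F m\<^esub> v') j \<otimes>\<^bsub>F\<^esub> w j = v j \<otimes>\<^bsub>F\<^esub> w j \<oplus>\<^bsub>F\<^esub> v' j \<otimes>\<^bsub>F\<^esub> w j"
      using assms by (simp add: vs.R.l_distr)
  qed simp
  also have "\<dots> = ip v w \<oplus>\<^bsub>F\<^esub> ip v' w"
    unfolding ip_def by (rule vs.R.finsum_addf[OF prod_Pi[OF assms(1,3)] prod_Pi[OF assms(2,3)]])
  finally show ?thesis .
qed

lemma ip_smult: assumes "c \<in> carrier F" "v \<in> carrier (VV F m)" "w \<in> carrier (VV F m)"
  shows "ip (c \<odot>\<^bsub>VV F m\<^esub> v) w = c \<otimes>\<^bsub>F\<^esub> ip v w"
proof -
  have "ip (c \<odot>\<^bsub>VV F m\<^esub> v) w = finsum F (\<lambda>j. c \<otimes>\<^bsub>F\<^esub> (v j \<otimes>\<^bsub>F\<^esub> w j)) {..<m}"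
    unfolding ip_def
  proof (rule vs.R.finsum_cong')
    show "(\<lambda>j. c \<otimes>\<^bsub>F\<^esub> (v j \<otimes>\<^bsub>F\<^esub> w j)) \<in> {..<m} \<rightarrow> carrier F"
      by (intro Pi_I vs.R.m_closed[OF assms(1)] vs.R.m_closed[OF cF[OF assms(2)] cF[OF assms(3)]])
    fix j show "(c \<odot>\<^bsub>VV F m\<^esub> v) j \<otimes>\<^bsub>F\<^esub> w j = c \<otimes>\<^bsub>F\<^esub> (v j \<otimes>\<^bsub>F\<^esub> w j)"
      using assms by (simp add: vs.R.m_assoc)
  qed simp
  also have "\<dots> = c \<otimes>\<^bsub>F\<^esub> ip v w"
    unfolding ip_def by (rule vs.R.finsum_rdistr[symmetric, OF _ assms(1) prod_Pi[OF assms(2,3)]]) simp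
  finally show ?thesis .
qed

lemma ip_zero: assumes "w \<in> carrier (VV F m)" shows "ip \<zero>\<^bsub>VV F m\<^esub> w = \<zero>\<^bsub>F\<^esub>"
proof -
  have "ip \<zero>\<^bsub>VV F m\<^esub> w = finsum F (\<lambda>j. \<zero>\<^bsub>F\<^esub>) {..<m}"
    unfolding ip_def by (rule vs.R.finsum_cong') (use assms in simp_all)
  then show ?thesis by simp
qed

lemma ann_isub:
  assumes w: "w \<in> carrier (VV F m)"
  shows "isub {v \<in> carrier (VV F m). ip v w = \<zero>\<^bsub>F\<^esub>}"
proof -
  have "\<zero>\<^bsub>VV F m\<^esub> \<in> {v \<in> carrier (VV F m). ip v w = \<zero>\<^bsub>F\<^esub>}"
    using ip_zero[OF w] by simp
  moreover have "\<And>v v'. v \<in> {v \<in> carrier (VV F m). ip v w = \<zero>\<^bsub>F\<^esub>} \<Longrightarrow>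
     v' \<in> {v \<in> carrier (VV F m). ip v w = \<zero>\<^bsub>F\<^esub>} \<Longrightarrow>
     v \<oplus>\<^bsub>VV F m\<^esub> v' \<in> {v \<in> carrier (VV F m). ip v w = \<zero>\<^bsub>F\<^esub>}"
    using ip_add w by simp
  moreover have "\<And>c v. c \<in> carrier F \<Longrightarrow> v \<in> {v \<in> carrier (VV F m). ip v w = \<zero>\<^bsub>F\<^esub>} \<Longrightarrow>
     c \<odot>\<^bsub>VV F m\<^esub> v \<in> {v \<in> carrier (VV F m). ip v w = \<zero>\<^bsub>F\<^esub>}"
    using ip_smult w by simp
  ultimately show ?thesis unfolding isub_def by simp
qed

lemma perp_isub:
  assumes "W \<subseteq> carrier (VV F m)" shows "isub (perp W)"
proof -
  have "\<zero>\<^bsub>VV F m\<^esub> \<in> perp W"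
    unfolding perp_def using ip_zero assms by auto
  moreover have "\<And>v v'. v \<in> perp W \<Longrightarrow> v' \<in> perp W \<Longrightarrow> v \<oplus>\<^bsub>VV F m\<^esub> v' \<in> perp W"
    unfolding perp_def using ip_add assms by auto
  moreover have "\<And>c v. c \<in> carrier F \<Longrightarrow> v \<in> perp W \<Longrightarrow> c \<odot>\<^bsub>VV F m\<^esub> v \<in> perp W"
    unfolding perp_def using ip_smult assms by auto
  moreover have "perp W \<subseteq> carrier (VV F m)" unfolding perp_def by auto
  ultimately show ?thesis unfolding isub_def by simp
qed

lemma perp_span:
  assumes Bc: "B \<subseteq> carrier (VV F m)" shows "perp (vs.span B) = perp B"
proof (intro equalityI subsetI)
  fix v assume "v \<in> perp (vs.span B)"
  then show "v \<in> perp B" using vs.in_own_span[OF Bc] unfolding perp_def by blast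
next
  fix v assume v: "v \<in> perp B"
  have vc: "v \<in> carrier (VV F m)" using v unfolding perp_def by simp
  let ?A = "{w \<in> carrier (VV F m). ip w v = \<zero>\<^bsub>F\<^esub>}"
  have "B \<subseteq> ?A"
  proof
    fix x assume x: "x \<in> B"
    have xc: "x \<in> carrier (VV F m)" using x Bc by blast
    have "ip v x = \<zero>\<^bsub>F\<^esub>" using v x unfolding perp_def by simp
    then show "x \<in> ?A" using ip_comm[OF xc vc] xc by simp
  qed
  then have "vs.span B \<subseteq> ?A" using vs.span_is_subset isub_submodule[OF ann_isub[OF vc]] by blast
  have "\<forall>w\<in>vs.span B. ip v w = \<zero>\<^bsub>F\<^esub>"
  proof
    fix w assume "w \<in> vs.span B"
    then have "w \<in> ?A" using \<open>vs.span B \<subseteq> ?A\<close> by blast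
    then show "ip v w = \<zero>\<^bsub>F\<^esub>" using ip_comm[OF vc] by simp
  qed
  then show "v \<in> perp (vs.span B)" using vc unfolding perp_def by simp
qed

lemma ip_ee: assumes "v \<in> carrier (VV F m)" "k < m" shows "ip v (ee k) = v k"
proof -
  have "ip v (ee k) = finsum F (\<lambda>j. if k = j then v j else \<zero>\<^bsub>F\<^esub>) {..<m}"
    unfolding ip_def
  proof (rule vs.R.finsum_cong')
    show "(\<lambda>j. if k = j then v j else \<zero>\<^bsub>F\<^esub>) \<in> {..<m} \<rightarrow> carrier F" using assms by simp
    fix j show "v j \<otimes>\<^bsub>F\<^esub> ee k j = (if k = j then v j else \<zero>\<^bsub>F\<^esub>)"
      unfolding ee_def using assms by simp
  qed simp
  also have "\<dots> = v k"
    by (rule vs.R.add.finprod_singleton) (use assms in simp_all)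
  finally show ?thesis .
qed

lemma perp_full: "perp (carrier (VV F m)) = {\<zero>\<^bsub>VV F m\<^esub>}"
proof (intro equalityI subsetI)
  fix v assume v: "v \<in> perp (carrier (VV F m))"
  have vc: "v \<in> carrier (VV F m)" using v unfolding perp_def by simp
  have "v k = \<zero>\<^bsub>F\<^esub>" for k
  proof (cases "k < m")
    case True
    then have "ip v (ee k) = \<zero>\<^bsub>F\<^esub>" using v ee_carrier unfolding perp_def by simp
    then show ?thesis using ip_ee[OF vc True] by simp
  next
    case False
    then show ?thesis using vc unfolding VV_carrier by (simp del: cF_simp)
  qed
  then show "v \<in> {\<zero>\<^bsub>VV F m\<^esub>}" by auto
next
  fix v assume "v \<in> {\<zero>\<^bsub>VV F m\<^esub>}"
  then show "v \<in> perp (carrier (VV F m))" unfolding perp_def using ip_zero by auto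
qed

lemma sub_perp_perp: assumes "W \<subseteq> carrier (VV F m)" shows "W \<subseteq> perp (perp W)"
proof
  fix x assume x: "x \<in> W"
  have xc: "x \<in> carrier (VV F m)" using x assms by blast
  have "\<forall>w\<in>perp W. ip x w = \<zero>\<^bsub>F\<^esub>"
  proof
    fix w assume w: "w \<in> perp W"
    then have "w \<in> carrier (VV F m)" "ip w x = \<zero>\<^bsub>F\<^esub>" using x unfolding perp_def by auto
    then show "ip x w = \<zero>\<^bsub>F\<^esub>" using ip_comm[OF xc] by simp
  qed
  then show "x \<in> perp (perp W)" using xc unfolding perp_def by simp
qed

end

context fvs
begin

definition TT :: "(nat \<Rightarrow> nat \<Rightarrow> 'a) \<Rightarrow> nat \<Rightarrow> (nat \<Rightarrow> 'a) \<Rightarrow> (nat \<Rightarrow> 'a)" where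
  "TT b d v = (\<lambda>j. if j < d then ip v (b j) else \<zero>\<^bsub>F\<^esub>)"

lemma TT_carrier:
  assumes "d \<le> m" "\<And>j. j < d \<Longrightarrow> b j \<in> carrier (VV F m)" "v \<in> carrier (VV F m)"
  shows "TT b d v \<in> carrier (VV F m)"
  using assms ip_carrier unfolding TT_def VV_carrier[of F m] by (auto simp del: cF_simp)

lemma lin_TT:
  assumes d: "d \<le> m" and b: "\<And>j. j < d \<Longrightarrow> b j \<in> carrier (VV F m)"
  shows "linear_map F (VV F m) (VV F m) (TT b d)"
proof -
  have vV: "vectorspace F (VV F m)" by (rule VV_vs[OF fld])
  have mV: "module F (VV F m)" by (rule vs.module_axioms)
  have h: "TT b d \<in> module_hom F (VV F m) (VV F m)"
    unfolding module_hom_def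
  proof (intro CollectI conjI allI impI)
    show "TT b d \<in> carrier (VV F m) \<rightarrow> carrier (VV F m)"
    proof
      fix v assume v: "v \<in> carrier (VV F m)"
      show "TT b d v \<in> carrier (VV F m)" using TT_carrier[of d b v] d b v by blast
    qed
  next
    fix v w assume vw: "v \<in> carrier (VV F m) \<and> w \<in> carrier (VV F m)"
    show "TT b d (v \<oplus>\<^bsub>VV F m\<^esub> w) = TT b d v \<oplus>\<^bsub>VV F m\<^esub> TT b d w"
    proof (rule ext)
      fix j show "TT b d (v \<oplus>\<^bsub>VV F m\<^esub> w) j = (TT b d v \<oplus>\<^bsub>VV F m\<^esub> TT b d w) j"
        using ip_add[of v w "b j"] vw b[of j] unfolding TT_def by simp
    qed
  next
    fix c v assume cv: "c \<in> carrier F \<and> v \<in> carrier (VV F m)"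
    show "TT b d (c \<odot>\<^bsub>VV F m\<^esub> v) = c \<odot>\<^bsub>VV F m\<^esub> TT b d v"
    proof (rule ext)
      fix j show "TT b d (c \<odot>\<^bsub>VV F m\<^esub> v) j = (c \<odot>\<^bsub>VV F m\<^esub> TT b d v) j"
        using ip_smult[of c v "b j"] cv b[of j] unfolding TT_def by simp
    qed
  qed
  show ?thesis
    unfolding linear_map_def mod_hom_def mod_hom_axioms_def using vV mV h by simp
qed

lemma dim_vs:
  assumes U: "isub U" shows "vectorspace.dim F (VV F m\<lparr>carrier := U\<rparr>) = vd U"
proof -
  obtain B where B: "B \<subseteq> U" "finite B" "vs.lin_indpt B" "vs.span B = U" "vd U = card B"
    using isub_vd[OF U] by blast
  have sm: "submodule F U (VV F m)" by (rule isub_submodule[OF U])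
  have sub: "subspace F U (VV F m)" unfolding subspace_def using sm VV_vs[OF fld] by simp
  interpret W: vectorspace F "VV F m\<lparr>carrier := U\<rparr>" by (rule vs.subspace_is_vs[OF sub])
  have sp: "W.span B = vs.span B" using vs.span_li_not_depend(1)[OF B(1) sm] .
  have li: "W.lin_dep B = vs.lin_dep B" using vs.span_li_not_depend(2)[OF B(1) sm] .
  have "W.basis B" unfolding W.basis_def using sp li B by simp
  then show ?thesis using W.dim_basis[OF B(2)] B(5) by simp
qed

end

context fvs
begin

lemma vd_zero: "vd {\<zero>\<^bsub>VV F m\<^esub>} = 0"
proof -
  have "vs.lin_indpt {}" by (rule vs.finite_lin_indpt2) simp_all
  then have "vd (vs.span {}) = card {}" using vd_basis[of "{}"] by simp
  then show ?thesis using vs.span_empty by simp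
qed

lemma isub_zero: "isub {\<zero>\<^bsub>VV F m\<^esub>}"
  using span_isub[of "{}"] vs.span_empty by simp

lemma perp_dim1:
  assumes W: "isub W" shows "vd (perp W) + vd W = m"
proof -
  obtain B where B: "B \<subseteq> W" "finite B" "vs.lin_indpt B" "vs.span B = W" "vd W = card B"
    using isub_vd[OF W] by blast
  have Wc: "W \<subseteq> carrier (VV F m)" by (rule isub_sub[OF W])
  have Bc: "B \<subseteq> carrier (VV F m)" using B(1) Wc by blast
  obtain B' where B': "B \<subseteq> B'" "B' \<subseteq> carrier (VV F m)" "finite B'" "vs.lin_indpt B'"
      "vs.span B' = carrier (VV F m)"
    using basis_ext[OF isub_carrier Bc B(3)] by blast
  have cB': "card B' = m" using vd_basis[OF B'(2,3,4)] B'(5) vd_carrier by simp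
  define d where "d = card B"
  have dm: "d \<le> m" using card_mono[OF B'(3) B'(1)] cB' d_def by simp
  obtain g where g: "bij_betw g {0..<d} B" using ex_bij_betw_nat_finite[OF B(2)] d_def by blast
  obtain g' where g': "bij_betw g' {0..<card (B' - B)} (B' - B)"
    using ex_bij_betw_nat_finite[of "B' - B"] B'(3) by blast
  have cD: "card (B' - B) = m - d" using card_Diff_subset[OF B(2) B'(1)] cB' d_def by simp
  define b where "b = (\<lambda>j. if j < d then g j else g' (j - d))"
  have gB: "g ` {0..<d} = B" using g by (simp add: bij_betw_def)
  have gB': "g' ` {0..<m - d} = B' - B" using g' cD by (simp add: bij_betw_def)
  have bB: "b ` {..<d} = B"
  proof -
    have "b ` {..<d} = g ` {0..<d}" unfolding b_def by (intro image_cong) auto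
    then show ?thesis using gB by simp
  qed
  have bm: "b j \<in> B'" if "j < m" for j
  proof (cases "j < d")
    case True
    then have "b j \<in> B" using bB by blast
    then show ?thesis using B'(1) by blast
  next
    case False
    then have "b j = g' (j - d)" unfolding b_def by simp
    moreover have "j - d \<in> {0..<m - d}" using False that by auto
    ultimately show ?thesis using gB' by blast
  qed
  have B'b: "B' \<subseteq> b ` {..<m}"
  proof
    fix x assume x: "x \<in> B'"
    show "x \<in> b ` {..<m}"
    proof (cases "x \<in> B")
      case True
      then obtain j where "j < d" "b j = x" using bB by force
      then show ?thesis using dm by force
    next
      case False
      then have "x \<in> g' ` {0..<m - d}" using gB' x by blast
      then obtain i where i: "i < m - d" "x = g' i" by auto
      have "b (d + i) = x" unfolding b_def using i by simp
      moreover have "d + i < m" using i dm by simp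
      ultimately show ?thesis by force
    qed
  qed
  have bc: "\<And>j. j < m \<Longrightarrow> b j \<in> carrier (VV F m)" using bm B'(2) by blast
  have bcd: "\<And>j. j < d \<Longrightarrow> b j \<in> carrier (VV F m)" using bc dm by simp
  interpret R: linear_map F "VV F m" "VV F m" "TT b m" by (rule lin_TT[OF le_refl bc])
  interpret T: linear_map F "VV F m" "VV F m" "TT b d" by (rule lin_TT[OF dm bcd])
  have kerR: "R.kerT = {\<zero>\<^bsub>VV F m\<^esub>}"
  proof (intro equalityI subsetI)
    fix v assume v: "v \<in> R.kerT"
    then have vc: "v \<in> carrier (VV F m)" and z: "TT b m v = \<zero>\<^bsub>VV F m\<^esub>"
      unfolding R.ker_def by auto
    have "\<forall>j<m. ip v (b j) = \<zero>\<^bsub>F\<^esub>"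
    proof (intro allI impI)
      fix j assume "j < m"
      have "TT b m v j = \<zero>\<^bsub>F\<^esub>" using z by simp
      then show "ip v (b j) = \<zero>\<^bsub>F\<^esub>" using \<open>j < m\<close> unfolding TT_def by simp
    qed
    then have "v \<in> perp B'" using vc B'b unfolding perp_def by blast
    then have "v \<in> perp (carrier (VV F m))" using perp_span[OF B'(2)] B'(5) by simp
    then show "v \<in> {\<zero>\<^bsub>VV F m\<^esub>}" using perp_full by simp
  next
    fix v assume "v \<in> {\<zero>\<^bsub>VV F m\<^esub>}"
    then show "v \<in> R.kerT" unfolding R.ker_def using R.f0_is_0 by simp
  qed
  have rn: "vectorspace.dim F (VV F m\<lparr>carrier := R.imT\<rparr>) + vectorspace.dim F (VV F m\<lparr>carrier := R.kerT\<rparr>) = vs.dim"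
    by (rule R.rank_nullity[OF fin_dim_V])
  have isR: "isub R.imT" using R.imT_is_subspace submodule_isub unfolding subspace_def by blast
  have "vd R.imT = m" using rn kerR dim_vs[OF isR] dim_vs[OF isub_zero] vd_zero dim_V by simp
  then have imR: "R.imT = carrier (VV F m)"
    using vd_eq[OF isR isub_carrier isub_sub[OF isR]] vd_carrier by simp
  have imT: "T.imT = CC d"
  proof (intro equalityI subsetI)
    fix u assume "u \<in> T.imT"
    then obtain v where v: "v \<in> carrier (VV F m)" "u = TT b d v" unfolding T.im_def by blast
    have "u \<in> carrier (VV F m)" using TT_carrier[OF dm bcd v(1)] v(2) by simp
    moreover have "\<forall>j\<ge>d. u j = \<zero>\<^bsub>F\<^esub>" using v(2) unfolding TT_def by simp
    ultimately show "u \<in> CC d" unfolding CC_def by simp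
  next
    fix u assume u: "u \<in> CC d"
    then have "u \<in> R.imT" using imR unfolding CC_def by simp
    then obtain v where v: "v \<in> carrier (VV F m)" "u = TT b m v" unfolding R.im_def by blast
    have "TT b d v = u"
    proof
      fix j show "TT b d v j = u j"
      proof (cases "j < d")
        case True
        then show ?thesis using v(2) dm unfolding TT_def by simp
      next
        case False
        then have "u j = \<zero>\<^bsub>F\<^esub>" using u unfolding CC_def by simp
        then show ?thesis using False unfolding TT_def by simp
      qed
    qed
    then show "u \<in> T.imT" unfolding T.im_def using v(1) by blast
  qed
  have kerT: "T.kerT = perp W"
  proof -
    have "T.kerT = perp B"
    proof (intro equalityI subsetI)
      fix v assume v: "v \<in> T.kerT"
      then have vc: "v \<in> carrier (VV F m)" and z: "TT b d v = \<zero>\<^bsub>VV F m\<^esub>"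
        unfolding T.ker_def by auto
      have "\<forall>w\<in>B. ip v w = \<zero>\<^bsub>F\<^esub>"
      proof
        fix w assume "w \<in> B"
        then obtain j where j: "j < d" "w = b j" using bB by force
        have "TT b d v j = \<zero>\<^bsub>F\<^esub>" using z by simp
        then show "ip v w = \<zero>\<^bsub>F\<^esub>" using j unfolding TT_def by simp
      qed
      then show "v \<in> perp B" using vc unfolding perp_def by simp
    next
      fix v assume v: "v \<in> perp B"
      then have vc: "v \<in> carrier (VV F m)" unfolding perp_def by simp
      have "TT b d v = \<zero>\<^bsub>VV F m\<^esub>"
      proof
        fix j show "TT b d v j = \<zero>\<^bsub>VV F m\<^esub> j"
        proof (cases "j < d")
          case True
          then have "b j \<in> B" using bB by blast
          then show ?thesis using v True unfolding perp_def TT_def by simp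
        qed (simp add: TT_def)
      qed
      then show "v \<in> T.kerT" unfolding T.ker_def using vc by simp
    qed
    then show ?thesis using perp_span[OF Bc] B(4) by simp
  qed
  have rnT: "vectorspace.dim F (VV F m\<lparr>carrier := T.imT\<rparr>) + vectorspace.dim F (VV F m\<lparr>carrier := T.kerT\<rparr>) = vs.dim"
    by (rule T.rank_nullity[OF fin_dim_V])
  have isC: "isub (CC d)" using span_isub[OF EE_carrier[OF dm]] EE_span[OF dm] by simp
  have vC: "vd (CC d) = d"
    using vd_basis[OF EE_carrier[OF dm] finite_EE EE_indep[OF dm]] EE_span[OF dm] card_EE by simp
  have isP: "isub (perp W)" by (rule perp_isub[OF Wc])
  show ?thesis using rnT imT kerT dim_vs[OF isC] dim_vs[OF isP] vC dim_V B(5) d_def by simp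
qed

lemma perp_perp:
  assumes W: "isub W" shows "perp (perp W) = W"
proof -
  have Wc: "W \<subseteq> carrier (VV F m)" by (rule isub_sub[OF W])
  have isP: "isub (perp W)" by (rule perp_isub[OF Wc])
  have isPP: "isub (perp (perp W))" by (rule perp_isub[OF isub_sub[OF isP]])
  have "vd (perp (perp W)) = vd W" using perp_dim1[OF W] perp_dim1[OF isP] by simp
  then show ?thesis using vd_eq[OF W isPP sub_perp_perp[OF Wc]] by simp
qed

end

context fvs
begin

lemma span_single:
  assumes v: "v \<in> carrier (VV F m)" and y: "y \<in> vs.span {v}"
  obtains c where "c \<in> carrier F" "y = c \<odot>\<^bsub>VV F m\<^esub> v"
proof -
  have vc: "{v} \<subseteq> carrier (VV F m)" using v by simp
  obtain a where a: "a \<in> {v} \<rightarrow> carrier F" "vs.lincomb a {v} = y"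
    using vs.finite_in_span[OF _ vc y] by blast
  have "vs.lincomb a ({} \<union> {v}) = a v \<odot>\<^bsub>VV F m\<^esub> v \<oplus>\<^bsub>VV F m\<^esub> vs.lincomb a {}"
    by (rule vs.lincomb_insert) (use a v in auto)
  then have "y = a v \<odot>\<^bsub>VV F m\<^esub> v"
    using a(2) vs.M.r_zero[OF vs.smult_closed[OF _ v], of "a v"] a(1) by simp
  then show ?thesis using that a(1) by blast
qed

lemma ext_line:
  assumes W: "isub W" and v: "v \<in> carrier (VV F m)" "v \<notin> W"
  defines "P \<equiv> vs.span {v}"
  defines "S \<equiv> {x \<oplus>\<^bsub>VV F m\<^esub> y | x y. x \<in> W \<and> y \<in> P}"
  shows "isub S" "vd S = vd W + 1" "W \<subseteq> S" "W \<inter> P = {\<zero>\<^bsub>VV F m\<^esub>}" "isub P" "vd P = 1"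
proof -
  obtain B where B: "B \<subseteq> W" "finite B" "vs.lin_indpt B" "vs.span B = W" "vd W = card B"
    using isub_vd[OF W] by blast
  have Wc: "W \<subseteq> carrier (VV F m)" by (rule isub_sub[OF W])
  have Bc: "B \<subseteq> carrier (VV F m)" using B(1) Wc by blast
  have vB: "v \<notin> B" using v(2) B(1) by blast
  have iB1: "vs.lin_indpt (insert v B)" using indep_insert[OF Bc B(3) v(1)] v(2) B(4) by simp
  have B1c: "insert v B \<subseteq> carrier (VV F m)" using Bc v(1) by simp
  have vc1: "{v} \<subseteq> carrier (VV F m)" using v(1) by simp
  have Psub: "P \<subseteq> vs.span (insert v B)" unfolding P_def by (rule vs.span_is_monotone) simp
  have Wsub: "W \<subseteq> vs.span (insert v B)" using B(4) by (metis vs.span_is_monotone subset_insertI)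
  have SS: "S = vs.span (insert v B)"
  proof (intro equalityI subsetI)
    fix z assume "z \<in> S"
    then obtain x y where xy: "z = x \<oplus>\<^bsub>VV F m\<^esub> y" "x \<in> W" "y \<in> P" unfolding S_def by blast
    show "z \<in> vs.span (insert v B)"
      using vs.span_add1[OF B1c] xy Psub Wsub by blast
  next
    fix z assume z: "z \<in> vs.span (insert v B)"
    have fin: "finite (insert v B)" using B(2) by simp
    obtain a where a: "a \<in> insert v B \<rightarrow> carrier F" "vs.lincomb a (insert v B) = z"
      using vs.finite_in_span[OF fin B1c z] by blast
    have "vs.lincomb a (B \<union> {v}) = a v \<odot>\<^bsub>VV F m\<^esub> v \<oplus>\<^bsub>VV F m\<^esub> vs.lincomb a B"
      by (rule vs.lincomb_insert[OF B(2) Bc _ vB v(1)]) (use a in auto)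
    then have z2: "z = a v \<odot>\<^bsub>VV F m\<^esub> v \<oplus>\<^bsub>VV F m\<^esub> vs.lincomb a B" using a(2) by simp
    have av: "a v \<in> carrier F" using a(1) by auto
    have aB: "a \<in> B \<rightarrow> carrier F" using a(1) by auto
    have x: "vs.lincomb a B \<in> W"
      using B(4) B(2) Bc aB unfolding vs.finite_span[OF B(2) Bc] by blast
    have y: "a v \<odot>\<^bsub>VV F m\<^esub> v \<in> P"
    proof -
      have "v \<in> P" unfolding P_def using vs.in_own_span[OF vc1] by simp
      then show ?thesis unfolding P_def
        using submodule.smult_closed[OF vs.span_is_submodule[OF vc1] av] by blast
    qed
    have "z = vs.lincomb a B \<oplus>\<^bsub>VV F m\<^esub> a v \<odot>\<^bsub>VV F m\<^esub> v"
      using z2 vs.M.a_comm[OF vs.smult_closed[OF av v(1)] vs.lincomb_closed[OF Bc aB]] by simp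
    then show "z \<in> S" unfolding S_def using x y by blast
  qed
  show "isub S" unfolding SS by (rule span_isub[OF B1c])
  have "vd S = card (insert v B)" unfolding SS by (rule vd_basis[OF B1c _ iB1]) (use B(2) in simp)
  then show "vd S = vd W + 1" using B(2,5) vB by simp
  show "W \<subseteq> S" unfolding SS by (rule Wsub)
  show "isub P" unfolding P_def by (rule span_isub[OF vc1])
  have v0: "v \<noteq> \<zero>\<^bsub>VV F m\<^esub>" using v(2) W unfolding isub_def by auto
  have iv: "vs.lin_indpt {v}"
  proof -
    have "vs.lin_indpt {}" by (rule vs.finite_lin_indpt2) simp_all
    moreover have "v \<notin> vs.span {}" using vs.span_empty v0 by simp
    ultimately show ?thesis using indep_insert[of "{}" v] v(1) by simp
  qed
  show "vd P = 1" unfolding P_def using vd_basis[OF vc1 _ iv] by simp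
  show "W \<inter> P = {\<zero>\<^bsub>VV F m\<^esub>}"
  proof (intro equalityI subsetI)
    fix y assume y: "y \<in> W \<inter> P"
    then obtain c where c: "c \<in> carrier F" "y = c \<odot>\<^bsub>VV F m\<^esub> v"
      using span_single[OF v(1)] unfolding P_def by blast
    show "y \<in> {\<zero>\<^bsub>VV F m\<^esub>}"
    proof (cases "c = \<zero>\<^bsub>F\<^esub>")
      case True
      then show ?thesis using c vs.smult_l_null[OF v(1)] by simp
    next
      case False
      have "v = inv\<^bsub>F\<^esub> c \<odot>\<^bsub>VV F m\<^esub> y" by (rule vs.mult_inverse[OF c(1) v(1) c(2)[symmetric] False])
      moreover have "inv\<^bsub>F\<^esub> c \<in> carrier F" using c(1) False vs.field_Units by auto
      ultimately have "v \<in> W" using y W unfolding isub_def by auto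
      then show ?thesis using v(2) by simp
    qed
  next
    fix y assume "y \<in> {\<zero>\<^bsub>VV F m\<^esub>}"
    moreover have "\<zero>\<^bsub>VV F m\<^esub> \<in> P" unfolding P_def
      using submodule.zero_closed[OF vs.span_is_submodule[OF vc1]] .
    moreover have "\<zero>\<^bsub>VV F m\<^esub> \<in> W" using W unfolding isub_def by simp
    ultimately show "y \<in> W \<inter> P" by simp
  qed
qed

lemma codim1:
  assumes W: "isub W" and d: "vd W \<ge> 1"
  obtains W' where "isub W'" "W' \<subseteq> W" "vd W' + 1 = vd W"
proof -
  obtain B where B: "B \<subseteq> W" "finite B" "vs.lin_indpt B" "vs.span B = W" "vd W = card B"
    using isub_vd[OF W] by blast
  have Bc: "B \<subseteq> carrier (VV F m)" using B(1) isub_sub[OF W] by blast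
  obtain b where b: "b \<in> B" using d B(5) by fastforce
  have c1: "B - {b} \<subseteq> carrier (VV F m)" using Bc by blast
  have i1: "vs.lin_indpt (B - {b})" using vs.subset_li_is_li[OF B(3)] by blast
  have "vd (vs.span (B - {b})) = card (B - {b})" using vd_basis[OF c1 _ i1] B(2) by simp
  then have "vd (vs.span (B - {b})) + 1 = vd W" 
  proof -
    have "card B \<ge> 1" using B(2) b by (metis One_nat_def Suc_leI card_gt_0_iff empty_iff)
    then show ?thesis using \<open>vd (vs.span (B - {b})) = card (B - {b})\<close> B(2,5) b by simp
  qed
  moreover have "vs.span (B - {b}) \<subseteq> W" using B(4) vs.span_is_monotone[of "B - {b}" B] by blast
  moreover have "isub (vs.span (B - {b}))" by (rule span_isub[OF c1])
  ultimately show ?thesis using that by blast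
qed

end

lemma vecs_VV: "vecs K ns i = carrier (VV (K i) (ns i))"
  unfolding vecs_def VV_carrier by simp

lemma zvec_VV: "zvec K i = \<zero>\<^bsub>VV (K i) (ns i)\<^esub>"
  unfolding zvec_def by simp

lemma vadd_VV: "vadd K i v w = v \<oplus>\<^bsub>VV (K i) (ns i)\<^esub> w"
  unfolding vadd_def by simp

lemma vsmult_VV: "vsmult K i c v = c \<odot>\<^bsub>VV (K i) (ns i)\<^esub> v"
  unfolding vsmult_def by simp

lemma is_subspace_isub: "field (K i) \<Longrightarrow> is_subspace K ns i W \<longleftrightarrow> fvs.isub (K i) (ns i) W"
  unfolding is_subspace_def fvs.isub_def[OF fvs.intro] vecs_VV zvec_def vadd_def vsmult_def by simp

lemma vdim_vd: "field (K i) \<Longrightarrow> vdim K i W = fvs.vd (K i) W"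
  unfolding vdim_def fvs.vd_def[OF fvs.intro] fvs.vsp_def[OF fvs.intro] vspan_def by simp

lemma vperp_perp: "field (K i) \<Longrightarrow> vperp K ns i W = fvs.perp (K i) (ns i) W"
  unfolding vperp_def fvs.perp_def[OF fvs.intro] fvs.ip_def[OF fvs.intro] vecs_VV by simp


context
  fixes K :: "nat \<Rightarrow> 'a ring" and ns :: "nat \<Rightarrow> nat" and i :: nat
  assumes fi: "field (K i)"
begin

interpretation fvs "K i" "ns i" by (rule fvs.intro[OF fi])

lemmas isI = is_subspace_isub[where K=K and i=i and ns=ns, OF fi]
lemmas vdI = vdim_vd[where K=K and i=i, OF fi]
lemmas vpI = vperp_perp[where K=K and i=i and ns=ns, OF fi]

lemma P1: "is_subspace K ns i W \<Longrightarrow> vdim K i W \<le> ns i"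
  using vd_le isI vdI by simp

lemma P2: "is_subspace K ns i W \<Longrightarrow> vdim K i W = ns i \<Longrightarrow> W = vecs K ns i"
  using vd_eq[of W "carrier (VV (K i) (ns i))"] isub_carrier isub_sub vd_carrier
    isI vdI by (simp add: vecs_VV)

lemma P3: "is_subspace K ns i (vecs K ns i)" "vdim K i (vecs K ns i) = ns i"
  using isub_carrier vd_carrier isI vdI by (simp_all add: vecs_VV)

lemma P4:
  assumes "is_subspace K ns i W"
  shows "is_subspace K ns i (vperp K ns i W)" "vdim K i (vperp K ns i W) + vdim K i W = ns i"
    "vperp K ns i (vperp K ns i W) = W"
proof -
  have W: "isub W" using assms isI by simp
  show "is_subspace K ns i (vperp K ns i W)"
    using perp_isub[OF isub_sub[OF W]] isI vpI by simp
  show "vdim K i (vperp K ns i W) + vdim K i W = ns i"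
    using perp_dim1[OF W] vdI vpI by simp
  show "vperp K ns i (vperp K ns i W) = W"
    using perp_perp[OF W] vpI by simp
qed

lemma P5: "is_subspace K ns i {zvec K i}" "vdim K i {zvec K i} = 0"
  using isub_zero vd_zero isI vdI zvec_VV[of K i ns] by simp_all

lemma P6:
  assumes "is_subspace K ns i W" "vdim K i W \<ge> 1"
  shows "\<exists>W'. is_subspace K ns i W' \<and> W' \<subseteq> W \<and> vdim K i W' + 1 = vdim K i W"
proof -
  have W: "isub W" using assms isI by simp
  obtain W' where "isub W'" "W' \<subseteq> W" "vd W' + 1 = vd W"
    using codim1[OF W] assms(2) vdI by auto
  then show ?thesis using isI vdI by auto
qed

lemma P7:
  assumes "is_subspace K ns i W" "W \<noteq> vecs K ns i"
  shows "\<exists>P S. is_subspace K ns i P \<and> vdim K i P = 1 \<and> W \<inter> P = {zvec K i} \<and>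
     is_subspace K ns i S \<and> vdim K i S = vdim K i W + 1 \<and> W \<subseteq> S \<and>
     S = {vadd K i x y | x y. x \<in> W \<and> y \<in> P}"
proof -
  have W: "isub W" using assms isI by simp
  obtain v where v: "v \<in> carrier (VV (K i) (ns i))" "v \<notin> W"
    using assms isub_sub[OF W] vecs_VV by blast
  note e = ext_line[OF W v]
  define P where "P = vs.span {v}"
  define S where "S = {vadd K i x y | x y. x \<in> W \<and> y \<in> P}"
  have SS: "S = {x \<oplus>\<^bsub>VV (K i) (ns i)\<^esub> y | x y. x \<in> W \<and> y \<in> vs.span {v}}"
    unfolding S_def P_def using vadd_VV by metis
  have S1: "isub S" using e(1) SS by simp
  have S2: "vd S = vd W + 1" using e(2) SS by simp
  have S3: "W \<subseteq> S" using e(3) SS by simp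
  have P1: "W \<inter> P = {zvec K i}" using e(4) P_def zvec_VV[of K i ns] by simp
  have P2: "isub P" "vd P = 1" using e(5,6) P_def by simp_all
  show ?thesis
    apply (rule exI[of _ P])
    apply (rule exI[of _ S])
    using S1 S2 S3 P1 P2 isI vdI S_def by simp
qed

lemma P8:
  assumes "is_subspace K ns i W"
  shows "{vadd K i x y | x y. x \<in> W \<and> y \<in> {zvec K i}} = W"
proof -
  have W: "isub W" using assms isI by simp
  have "vadd K i x (zvec K i) = x" if "x \<in> W" for x
  proof -
    have "x \<in> carrier (VV (K i) (ns i))" using that isub_sub[OF W] by blast
    then show ?thesis unfolding vadd_def zvec_def by (intro ext) simp
  qed
  then show ?thesis by force
qed

lemma P9: "is_subspace K ns i W \<Longrightarrow> zvec K i \<in> W"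
  unfolding is_subspace_def by simp

end


lemma sum_upd:
  fixes g :: "nat \<Rightarrow> 'b \<Rightarrow> nat"
  assumes "i \<in> A" "finite A"
  shows "sum (\<lambda>j. g j ((L(i := W)) j)) A + g i (L i) = sum (\<lambda>j. g j (L j)) A + g i W"
proof -
  have "sum (\<lambda>j. g j ((L(i := W)) j)) A = g i ((L(i := W)) i) + sum (\<lambda>j. g j ((L(i := W)) j)) (A - {i})"
    by (rule sum.remove[OF assms(2,1)])
  moreover have "sum (\<lambda>j. g j (L j)) A = g i (L i) + sum (\<lambda>j. g j (L j)) (A - {i})"
    by (rule sum.remove[OF assms(2,1)])
  moreover have "sum (\<lambda>j. g j ((L(i := W)) j)) (A - {i}) = sum (\<lambda>j. g j (L j)) (A - {i})"
    by (rule sum.cong) auto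
  ultimately show ?thesis by (simp add: ac_simps)
qed

context
  fixes K :: "nat \<Rightarrow> 'a ring" and l :: nat and ns :: "nat \<Rightarrow> nat"
  assumes fld: "\<And>i. i < l \<Longrightarrow> field (K i)"
begin

lemma Q1: "i < l \<Longrightarrow> is_subspace K ns i W \<Longrightarrow> vdim K i W \<le> ns i"
  by (rule P1[where K=K and i=i, OF fld])
lemma Q2: "i < l \<Longrightarrow> is_subspace K ns i W \<Longrightarrow> vdim K i W = ns i \<Longrightarrow> W = vecs K ns i"
  by (rule P2[where K=K and i=i, OF fld])
lemma Q3: "i < l \<Longrightarrow> is_subspace K ns i (vecs K ns i)" "i < l \<Longrightarrow> vdim K i (vecs K ns i) = ns i"
  by (rule P3[where K=K and i=i, OF fld], assumption)+
lemma Q4: "i < l \<Longrightarrow> is_subspace K ns i W \<Longrightarrow> is_subspace K ns i (vperp K ns i W)"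
  "i < l \<Longrightarrow> is_subspace K ns i W \<Longrightarrow> vdim K i (vperp K ns i W) + vdim K i W = ns i"
  "i < l \<Longrightarrow> is_subspace K ns i W \<Longrightarrow> vperp K ns i (vperp K ns i W) = W"
  by (rule P4[where K=K and i=i, OF fld], assumption+)+
lemma Q5: "i < l \<Longrightarrow> is_subspace K ns i {zvec K i}" "i < l \<Longrightarrow> vdim K i {zvec K i} = 0"
  by (rule P5[where K=K and i=i, OF fld], assumption)+
lemma Q6: "i < l \<Longrightarrow> is_subspace K ns i W \<Longrightarrow> vdim K i W \<ge> 1 \<Longrightarrow>
  \<exists>W'. is_subspace K ns i W' \<and> W' \<subseteq> W \<and> vdim K i W' + 1 = vdim K i W"
  by (rule P6[where K=K and i=i, OF fld])
lemma Q7: "i < l \<Longrightarrow> is_subspace K ns i W \<Longrightarrow> W \<noteq> vecs K ns i \<Longrightarrow>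
  \<exists>P S. is_subspace K ns i P \<and> vdim K i P = 1 \<and> W \<inter> P = {zvec K i} \<and>
     is_subspace K ns i S \<and> vdim K i S = vdim K i W + 1 \<and> W \<subseteq> S \<and>
     S = {vadd K i x y | x y. x \<in> W \<and> y \<in> P}"
  by (rule P7[where K=K and i=i, OF fld])
lemma Q8: "i < l \<Longrightarrow> is_subspace K ns i W \<Longrightarrow> {vadd K i x y | x y. x \<in> W \<and> y \<in> {zvec K i}} = W"
  by (rule P8[where K=K and i=i, OF fld])
lemma Q9: "is_subspace K ns i W \<Longrightarrow> zvec K i \<in> W"
  unfolding is_subspace_def by simp

definition L0 :: "nat \<Rightarrow> (nat \<Rightarrow> 'a) set" where
  "L0 = (\<lambda>i. if i < l then {zvec K i} else {})"

lemma LatD: "L \<in> Lat K l ns \<Longrightarrow> i < l \<Longrightarrow> is_subspace K ns i (L i)"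
  "L \<in> Lat K l ns \<Longrightarrow> \<not> i < l \<Longrightarrow> L i = {}"
  unfolding Lat_def by auto

lemma Rk_le: "L \<in> Lat K l ns \<Longrightarrow> Rk K l L \<le> (\<Sum>i<l. ns i)"
  unfolding Rk_def by (rule sum_mono) (use Q1 LatD in auto)

lemma full_Lat: "fullspace K l ns \<in> Lat K l ns" "Rk K l (fullspace K l ns) = (\<Sum>i<l. ns i)"
proof -
  show "fullspace K l ns \<in> Lat K l ns"
    unfolding Lat_def fullspace_def using Q3(1) by auto
  show "Rk K l (fullspace K l ns) = (\<Sum>i<l. ns i)"
    unfolding Rk_def fullspace_def by (rule sum.cong) (use Q3(2) in auto)
qed

lemma Rk_full_eq:
  assumes L: "L \<in> Lat K l ns" and R: "Rk K l L = (\<Sum>i<l. ns i)"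
  shows "L = fullspace K l ns"
proof (rule ccontr)
  assume "L \<noteq> fullspace K l ns"
  then obtain i where i: "L i \<noteq> fullspace K l ns i" by blast
  have il: "i < l" using i LatD(2)[OF L] unfolding fullspace_def by (cases "i < l") auto
  have ne: "L i \<noteq> vecs K ns i" using i il unfolding fullspace_def by simp
  have "vdim K i (L i) \<noteq> ns i" using Q2[OF il LatD(1)[OF L il]] ne by auto
  then have lt: "vdim K i (L i) < ns i" using Q1[OF il LatD(1)[OF L il]] by simp
  have "Rk K l L < (\<Sum>i<l. ns i)"
    unfolding Rk_def
    by (rule sum_strict_mono_ex1) (use Q1 LatD(1)[OF L] lt il in auto)
  then show False using R by simp
qed

lemma lperp_props:
  assumes L: "L \<in> Lat K l ns"
  shows "lperp K l ns L \<in> Lat K l ns" "Rk K l (lperp K l ns L) + Rk K l L = (\<Sum>i<l. ns i)"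
    "lperp K l ns (lperp K l ns L) = L"
proof -
  show "lperp K l ns L \<in> Lat K l ns"
    unfolding Lat_def lperp_def using Q4(1)[OF _ LatD(1)[OF L]] by auto
  have "Rk K l (lperp K l ns L) + Rk K l L = (\<Sum>i<l. vdim K i (lperp K l ns L i) + vdim K i (L i))"
    unfolding Rk_def by (simp add: sum.distrib)
  also have "\<dots> = (\<Sum>i<l. ns i)"
    by (rule sum.cong) (use Q4(2)[OF _ LatD(1)[OF L]] in \<open>auto simp: lperp_def\<close>)
  finally show "Rk K l (lperp K l ns L) + Rk K l L = (\<Sum>i<l. ns i)" .
  show "lperp K l ns (lperp K l ns L) = L"
  proof
    fix i show "lperp K l ns (lperp K l ns L) i = L i"
      using Q4(3)[OF _ LatD(1)[OF L]] LatD(2)[OF L] unfolding lperp_def by auto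
  qed
qed

lemma L0_Lat: "L0 \<in> Lat K l ns" "Rk K l L0 = 0"
proof -
  show "L0 \<in> Lat K l ns" unfolding Lat_def L0_def using Q5(1) by auto
  show "Rk K l L0 = 0" unfolding Rk_def L0_def by (rule sum.neutral) (use Q5(2) in auto)
qed

lemma down:
  assumes L: "L \<in> Lat K l ns" and R: "Rk K l L \<ge> 1"
  shows "\<exists>L' \<in> Lat K l ns. lle L' L \<and> Rk K l L' + 1 = Rk K l L"
proof -
  obtain i where il: "i < l" and d: "vdim K i (L i) \<ge> 1"
  proof (rule ccontr)
    assume "\<not> ?thesis"
    then have "\<forall>i<l. vdim K i (L i) = 0" using that by fastforce
    then have "Rk K l L = 0" unfolding Rk_def by simp
    then show False using R by simp
  qed
  obtain W' where W': "is_subspace K ns i W'" "W' \<subseteq> L i" "vdim K i W' + 1 = vdim K i (L i)"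
    using Q6[OF il LatD(1)[OF L il] d] by blast
  let ?L' = "L(i := W')"
  have "?L' \<in> Lat K l ns" using L W'(1) il unfolding Lat_def by auto
  moreover have "lle ?L' L" unfolding lle_def using W'(2) by auto
  moreover have "Rk K l ?L' + 1 = Rk K l L"
    using sum_upd[of i "{..<l}" "\<lambda>j W. vdim K j W" L W'] il W'(3) unfolding Rk_def by simp
  ultimately show ?thesis by blast
qed

lemma up:
  assumes L: "L \<in> Lat K l ns" and R: "Rk K l L < (\<Sum>i<l. ns i)"
  shows "\<exists>L'' P. L'' \<in> Lat K l ns \<and> P \<in> Lat K l ns \<and> lle L L'' \<and> Rk K l L'' = Rk K l L + 1 \<and>
     L'' = lsum K l L P \<and> linter L P = L0 \<and> Rk K l P = 1"
proof -
  obtain i where il: "i < l" and ne: "L i \<noteq> vecs K ns i"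
  proof (rule ccontr)
    assume "\<not> ?thesis"
    then have "\<forall>i<l. L i = vecs K ns i" using that by blast
    have "L = fullspace K l ns"
    proof
      fix j show "L j = fullspace K l ns j"
        using \<open>\<forall>i<l. L i = vecs K ns i\<close> LatD(2)[OF L, of j] unfolding fullspace_def by (cases "j < l") simp_all
    qed
    then show False using R full_Lat(2) by simp
  qed
  obtain Pi S where PS: "is_subspace K ns i Pi" "vdim K i Pi = 1" "L i \<inter> Pi = {zvec K i}"
     "is_subspace K ns i S" "vdim K i S = vdim K i (L i) + 1" "L i \<subseteq> S"
     "S = {vadd K i x y | x y. x \<in> L i \<and> y \<in> Pi}"
    using Q7[OF il LatD(1)[OF L il] ne] by blast
  define P where "P = L0(i := Pi)"
  define L'' where "L'' = L(i := S)"
  have PL: "P \<in> Lat K l ns" unfolding P_def using L0_Lat(1) PS(1) il unfolding Lat_def by auto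
  have LL: "L'' \<in> Lat K l ns" unfolding L''_def using L PS(4) il unfolding Lat_def by auto
  have le: "lle L L''" unfolding lle_def L''_def using PS(6) by auto
  have RL: "Rk K l L'' = Rk K l L + 1"
    using sum_upd[of i "{..<l}" "\<lambda>j W. vdim K j W" L S] il PS(5) unfolding Rk_def L''_def by simp
  have RP: "Rk K l P = 1"
    using sum_upd[of i "{..<l}" "\<lambda>j W. vdim K j W" L0 Pi] il PS(2) L0_Lat(2) Q5(2)[OF il]
    unfolding Rk_def P_def by (simp add: L0_def)
  have sum: "L'' = lsum K l L P"
  proof
    fix j show "L'' j = lsum K l L P j"
    proof (cases "j < l")
      case True
      show ?thesis
      proof (cases "j = i")
        case True
        then show ?thesis using PS(7) il unfolding L''_def P_def lsum_def by simp
      next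
        case False
        then show ?thesis using Q8[OF \<open>j < l\<close> LatD(1)[OF L \<open>j < l\<close>]] \<open>j < l\<close>
          unfolding L''_def P_def lsum_def L0_def by simp
      qed
    next
      case False
      then show ?thesis using LatD(2)[OF L False] il unfolding L''_def lsum_def by auto
    qed
  qed
  have int: "linter L P = L0"
  proof
    fix j show "linter L P j = L0 j"
    proof (cases "j < l")
      case True
      show ?thesis
      proof (cases "j = i")
        case True
        then show ?thesis using PS(3) il unfolding linter_def P_def L0_def by simp
      next
        case False
        then show ?thesis using Q9[OF LatD(1)[OF L \<open>j < l\<close>]] \<open>j < l\<close>
          unfolding linter_def P_def L0_def by auto
      qed
    next
      case False
      then show ?thesis using LatD(2)[OF L False] il unfolding linter_def P_def L0_def by auto
    qed
  qed
  show ?thesis using LL PL le RL sum int RP by blast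
qed

end


lemma gw_generic:
  fixes S :: "'x set" and rk :: "'x \<Rightarrow> nat" and nu :: "'x \<Rightarrow> nat" and a :: "nat \<Rightarrow> nat" and N :: nat
  assumes a0: "a 0 = 0"
    and step: "\<And>t. t < N \<Longrightarrow> a t \<le> a (Suc t) \<and> a (Suc t) \<le> Suc (a t)"
    and bound: "\<And>x. x \<in> S \<Longrightarrow> rk x \<le> N \<and> nu x \<le> a (rk x)"
    and attain: "\<And>t. t \<le> N \<Longrightarrow> \<exists>x\<in>S. rk x = t \<and> nu x = a t"
  shows "(\<lambda>r. Min {rk x | x. x \<in> S \<and> nu x = r}) ` {1..a N} = {t \<in> {1..N}. a t = Suc (a (t - 1))}"
proof -
  have mono: "a s \<le> a t" if "s \<le> t" "t \<le> N" for s t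
    using that
  proof (induct t)
    case 0 then show ?case by simp
  next
    case (Suc t)
    then show ?case
    proof (cases "s \<le> t")
      case True
      then have "a s \<le> a t" using Suc by simp
      also have "a t \<le> a (Suc t)" using step[of t] Suc by simp
      finally show ?thesis .
    next
      case False
      then have "s = Suc t" using Suc by simp
      then show ?thesis by simp
    qed
  qed
  define D where "D r = (LEAST t. r \<le> a t)" for r
  have Dprops: "1 \<le> D r \<and> D r \<le> N \<and> a (D r) = r \<and> a (D r - 1) = r - 1" if r: "r \<in> {1..a N}" for r
  proof -
    have ex: "r \<le> a N" using r by simp
    have le: "D r \<le> N" unfolding D_def by (rule Least_le) (rule ex)
    have ge: "r \<le> a (D r)" unfolding D_def by (rule LeastI) (rule ex)
    have D1: "D r \<ge> 1"
    proof (rule ccontr)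
      assume "\<not> D r \<ge> 1"
      then have "D r = 0" by simp
      then show False using ge a0 r by simp
    qed
    have lt: "a (D r - 1) < r"
    proof (rule ccontr)
      assume "\<not> a (D r - 1) < r"
      then have "r \<le> a (D r - 1)" by simp
      then have "D r \<le> D r - 1" unfolding D_def by (rule Least_le)
      then show False using D1 by simp
    qed
    have st: "a (D r) \<le> Suc (a (D r - 1))" using step[of "D r - 1"] D1 le by simp
    have st2: "a (D r - 1) \<le> a (D r)" using step[of "D r - 1"] D1 le by simp
    show ?thesis using D1 le ge lt st by simp
  qed
  have Min_eq: "Min {rk x | x. x \<in> S \<and> nu x = r} = D r" if r: "r \<in> {1..a N}" for r
  proof (rule Min_eqI)
    show "finite {rk x | x. x \<in> S \<and> nu x = r}"
      by (rule finite_subset[of _ "{..N}"]) (use bound in auto)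
    fix y assume "y \<in> {rk x | x. x \<in> S \<and> nu x = r}"
    then obtain x where x: "x \<in> S" "nu x = r" "y = rk x" by blast
    have "r \<le> a (rk x)" using bound[OF x(1)] x(2) by simp
    then show "D r \<le> y" unfolding D_def x(3) by (rule Least_le)
  next
    obtain x where x: "x \<in> S" "rk x = D r" "nu x = a (D r)" using attain[of "D r"] Dprops[OF r] by blast
    then have "nu x = r" using Dprops[OF r] by simp
    then show "D r \<in> {rk x | x. x \<in> S \<and> nu x = r}" using x by force
  qed
  show ?thesis
  proof (intro equalityI subsetI)
    fix t assume "t \<in> (\<lambda>r. Min {rk x | x. x \<in> S \<and> nu x = r}) ` {1..a N}"
    then obtain r where r: "r \<in> {1..a N}" "t = Min {rk x | x. x \<in> S \<and> nu x = r}" by blast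
    then have t: "t = D r" using Min_eq by simp
    show "t \<in> {t \<in> {1..N}. a t = Suc (a (t - 1))}" using Dprops[OF r(1)] t r(1) by auto
  next
    fix t assume t: "t \<in> {t \<in> {1..N}. a t = Suc (a (t - 1))}"
    define r where "r = a t"
    have r: "r \<in> {1..a N}" using t mono[of t N] unfolding r_def by auto
    have "D r = t"
    proof (rule antisym)
      show "D r \<le> t" unfolding D_def r_def by (rule Least_le) simp
      show "t \<le> D r"
      proof (rule ccontr)
        assume "\<not> t \<le> D r"
        then have "D r \<le> t - 1" by simp
        moreover have "t - 1 \<le> N" using t by auto
        ultimately have "a (D r) \<le> a (t - 1)" using mono[of "D r" "t - 1"] by simp
        then show False using Dprops[OF r] t unfolding r_def by simp
      qed
    qed
    then show "t \<in> (\<lambda>r. Min {rk x | x. x \<in> S \<and> nu x = r}) ` {1..a N}"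
      using Min_eq[OF r] r by force
  qed
qed


context
  fixes K :: "nat \<Rightarrow> 'a ring" and l :: nat and ns :: "nat \<Rightarrow> nat"
    and \<rho> :: "(nat \<Rightarrow> (nat \<Rightarrow> 'a) set) \<Rightarrow> nat"
  assumes fld: "\<And>i. i < l \<Longrightarrow> field (K i)"
    and sm: "sum_matroid K l ns \<rho>"
begin

lemma R1: "L \<in> Lat K l ns \<Longrightarrow> \<rho> L \<le> Rk K l L"
  using sm unfolding sum_matroid_def by blast

lemma R2: "L \<in> Lat K l ns \<Longrightarrow> L' \<in> Lat K l ns \<Longrightarrow> lle L L' \<Longrightarrow> \<rho> L \<le> \<rho> L'"
  using sm unfolding sum_matroid_def by blast

lemma R3: "L \<in> Lat K l ns \<Longrightarrow> L' \<in> Lat K l ns \<Longrightarrow>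
    \<rho> (lsum K l L L') + \<rho> (linter L L') \<le> \<rho> L + \<rho> L'"
  using sm unfolding sum_matroid_def by blast

definition Aset :: "nat \<Rightarrow> nat set" where
  "Aset t = {nullity K l \<rho> L | L. L \<in> Lat K l ns \<and> Rk K l L = t}"

definition AA :: "nat \<Rightarrow> nat" where
  "AA t = Max (Aset t)"

lemma up_step:
  assumes L: "L \<in> Lat K l ns" and t: "Rk K l L < (\<Sum>i<l. ns i)"
  shows "\<exists>L''\<in>Lat K l ns. Rk K l L'' = Rk K l L + 1 \<and> nullity K l \<rho> L \<le> nullity K l \<rho> L''"
proof -
  obtain L'' P where U: "L'' \<in> Lat K l ns" "P \<in> Lat K l ns" "lle L L''" "Rk K l L'' = Rk K l L + 1"
     "L'' = lsum K l L P" "linter L P = L0 K l" "Rk K l P = 1"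
    using up[OF fld L t] by blast
  have "\<rho> L'' \<le> \<rho> L + \<rho> P" using R3[OF L U(2)] U(5,6) by simp
  moreover have "\<rho> P \<le> 1" using R1[OF U(2)] U(7) by simp
  moreover have "\<rho> L \<le> Rk K l L" by (rule R1[OF L])
  ultimately have "nullity K l \<rho> L \<le> nullity K l \<rho> L''" unfolding nullity_def using U(4) by simp
  then show ?thesis using U(1,4) by blast
qed

lemma exists_rank: "t \<le> (\<Sum>i<l. ns i) \<Longrightarrow> \<exists>L\<in>Lat K l ns. Rk K l L = t"
proof (induct t)
  case 0 then show ?case using L0_Lat[where K=K and l=l, OF fld] by blast
next
  case (Suc t)
  then obtain L where "L \<in> Lat K l ns" "Rk K l L = t" by auto
  then show ?case using up_step[of L] Suc(2) by auto
qed

lemma Aset_fin: "finite (Aset t)"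
proof (rule finite_subset[of _ "{..t}"])
  show "Aset t \<subseteq> {..t}" unfolding Aset_def nullity_def by auto
qed simp

lemma Aset_ne: "t \<le> (\<Sum>i<l. ns i) \<Longrightarrow> Aset t \<noteq> {}"
  using exists_rank unfolding Aset_def by blast

lemma AA_ge: "L \<in> Lat K l ns \<Longrightarrow> nullity K l \<rho> L \<le> AA (Rk K l L)"
  unfolding AA_def by (rule Max_ge[OF Aset_fin]) (auto simp: Aset_def)

lemma AA_attain: "t \<le> (\<Sum>i<l. ns i) \<Longrightarrow> \<exists>L\<in>Lat K l ns. Rk K l L = t \<and> nullity K l \<rho> L = AA t"
proof -
  assume t: "t \<le> (\<Sum>i<l. ns i)"
  have "AA t \<in> Aset t" unfolding AA_def by (rule Max_in[OF Aset_fin Aset_ne[OF t]])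
  then show ?thesis unfolding Aset_def by auto
qed

lemma AA0: "AA 0 = 0"
proof -
  obtain L where "L \<in> Lat K l ns" "Rk K l L = 0" "nullity K l \<rho> L = AA 0"
    using AA_attain[of 0] by auto
  then show ?thesis unfolding nullity_def by simp
qed

lemma AA_le: "t \<le> (\<Sum>i<l. ns i) \<Longrightarrow> AA t \<le> t"
  using AA_attain unfolding nullity_def by fastforce

lemma AA_step: "t < (\<Sum>i<l. ns i) \<Longrightarrow> AA t \<le> AA (Suc t) \<and> AA (Suc t) \<le> Suc (AA t)"
proof
  assume t: "t < (\<Sum>i<l. ns i)"
  obtain L where L: "L \<in> Lat K l ns" "Rk K l L = t" "nullity K l \<rho> L = AA t"
    using AA_attain[of t] t by auto
  obtain L'' where L'': "L'' \<in> Lat K l ns" "Rk K l L'' = t + 1" "nullity K l \<rho> L \<le> nullity K l \<rho> L''"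
    using up_step[OF L(1)] L(2) t by auto
  show "AA t \<le> AA (Suc t)" using AA_ge[OF L''(1)] L''(2,3) L(3) by simp
next
  assume t: "t < (\<Sum>i<l. ns i)"
  obtain L where L: "L \<in> Lat K l ns" "Rk K l L = Suc t" "nullity K l \<rho> L = AA (Suc t)"
    using AA_attain[of "Suc t"] t by auto
  obtain L' where L': "L' \<in> Lat K l ns" "lle L' L" "Rk K l L' + 1 = Rk K l L"
    using down[OF fld L(1)] L(2) by auto
  have "\<rho> L' \<le> \<rho> L" by (rule R2[OF L'(1) L(1) L'(2)])
  moreover have "\<rho> L \<le> Rk K l L" by (rule R1[OF L(1)])
  ultimately have "nullity K l \<rho> L \<le> Suc (nullity K l \<rho> L')" unfolding nullity_def using L'(3) by simp
  moreover have "nullity K l \<rho> L' \<le> AA t" using AA_ge[OF L'(1)] L'(3) L(2) by simp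
  ultimately show "AA (Suc t) \<le> Suc (AA t)" using L(3) by simp
qed

lemma AA_mono: "s \<le> t \<Longrightarrow> t \<le> (\<Sum>i<l. ns i) \<Longrightarrow> AA s \<le> AA t"
proof (induct t)
  case 0 then show ?case by simp
next
  case (Suc t)
  show ?case
  proof (cases "s \<le> t")
    case True
    then show ?thesis using Suc AA_step[of t] by fastforce
  next
    case False
    then show ?thesis using Suc by (simp add: le_Suc_eq)
  qed
qed

lemma AA_sub: "s \<le> t \<Longrightarrow> t \<le> (\<Sum>i<l. ns i) \<Longrightarrow> AA t \<le> AA s + (t - s)"
proof (induct t)
  case 0 then show ?case by simp
next
  case (Suc t)
  show ?case
  proof (cases "s \<le> t")
    case True
    then show ?thesis using Suc AA_step[of t] by fastforce
  next
    case False
    then show ?thesis using Suc by (simp add: le_Suc_eq)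
  qed
qed

lemma k_le: "\<rho> (fullspace K l ns) \<le> (\<Sum>i<l. ns i)"
  using R1[OF full_Lat(1)[where K=K and l=l and ns=ns, OF fld]] full_Lat(2)[where K=K and l=l and ns=ns, OF fld] by simp

lemma AAn: "AA (\<Sum>i<l. ns i) = (\<Sum>i<l. ns i) - \<rho> (fullspace K l ns)"
proof -
  obtain L where L: "L \<in> Lat K l ns" "Rk K l L = (\<Sum>i<l. ns i)" "nullity K l \<rho> L = AA (\<Sum>i<l. ns i)"
    using AA_attain by auto
  have "L = fullspace K l ns" by (rule Rk_full_eq[OF fld L(1,2)])
  then show ?thesis using L(2,3) unfolding nullity_def by simp
qed

end


lemma gw_eq: "gen_weight K l ns \<sigma> = (\<lambda>r. Min {Rk K l x | x. x \<in> Lat K l ns \<and> nullity K l \<sigma> x = r})"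
  unfolding gen_weight_def by (rule ext) simp

theorem mainTheorem10:
  fixes K :: "nat \<Rightarrow> 'a ring" and l :: nat and ns :: "nat \<Rightarrow> nat"
    and \<rho> :: "(nat \<Rightarrow> (nat \<Rightarrow> 'a) set) \<Rightarrow> nat"
  assumes "l \<ge> 1"
    and "\<And>i. i < l \<Longrightarrow> ns i \<ge> 1"
    and "\<And>i. i < l \<Longrightarrow> field (K i)"
    and "\<And>i. i < l \<Longrightarrow> finite (carrier (K i))"
    and "sum_matroid K l ns \<rho>"
  defines "n \<equiv> (\<Sum>i<l. ns i)"
    and "k \<equiv> \<rho> (fullspace K l ns)"
  shows "{1..n} = (gen_weight K l ns (dual_rank K l ns \<rho>)) ` {1..k}
                  \<union> (\<lambda>i. n + 1 - gen_weight K l ns \<rho> i) ` {1..n - k}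
    \<and> (gen_weight K l ns (dual_rank K l ns \<rho>)) ` {1..k}
        \<inter> (\<lambda>i. n + 1 - gen_weight K l ns \<rho> i) ` {1..n - k} = {}"
proof -
  note fld = assms(3)
  note sm = assms(5)
  define A where "A = AA K l ns \<rho>"
  have kn: "k \<le> n" unfolding k_def n_def by (rule k_le[OF fld sm])
  have An: "A n = n - k" unfolding A_def n_def k_def by (rule AAn[OF fld sm])
  have A0: "A 0 = 0" unfolding A_def by (rule AA0[OF fld sm])
  have Astep: "\<And>t. t < n \<Longrightarrow> A t \<le> A (Suc t) \<and> A (Suc t) \<le> Suc (A t)"
    unfolding A_def n_def by (rule AA_step[OF fld sm])
  have Age: "\<And>L. L \<in> Lat K l ns \<Longrightarrow> nullity K l \<rho> L \<le> A (Rk K l L)"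
    unfolding A_def by (rule AA_ge[OF fld sm])
  have Aatt: "\<And>t. t \<le> n \<Longrightarrow> \<exists>L\<in>Lat K l ns. Rk K l L = t \<and> nullity K l \<rho> L = A t"
    unfolding A_def n_def by (rule AA_attain[OF fld sm])
  have Amono: "\<And>s t. s \<le> t \<Longrightarrow> t \<le> n \<Longrightarrow> A s \<le> A t"
    unfolding A_def n_def by (rule AA_mono[OF fld sm])
  have Asub: "\<And>s t. s \<le> t \<Longrightarrow> t \<le> n \<Longrightarrow> A t \<le> A s + (t - s)"
    unfolding A_def n_def by (rule AA_sub[OF fld sm])
  have Rkle: "\<And>L. L \<in> Lat K l ns \<Longrightarrow> Rk K l L \<le> n"
    unfolding n_def by (rule Rk_le[OF fld])
  have lp: "\<And>L. L \<in> Lat K l ns \<Longrightarrow> lperp K l ns L \<in> Lat K l ns \<and>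
      Rk K l (lperp K l ns L) + Rk K l L = n \<and> lperp K l ns (lperp K l ns L) = L"
    unfolding n_def using lperp_props[where K=K and l=l, OF fld] by blast
  have R1': "\<And>L. L \<in> Lat K l ns \<Longrightarrow> \<rho> L \<le> Rk K l L" by (rule R1[OF fld sm])
  define JA where "JA = {t \<in> {1..n}. A t = Suc (A (t - 1))}"
  have G1: "gen_weight K l ns \<rho> ` {1..n - k} = JA"
    unfolding gw_eq JA_def An[symmetric]
  proof (rule gw_generic[where a = A])
    show "A 0 = 0" by (rule A0)
    show "\<And>t. t < n \<Longrightarrow> A t \<le> A (Suc t) \<and> A (Suc t) \<le> Suc (A t)" by (rule Astep)
    show "\<And>x. x \<in> Lat K l ns \<Longrightarrow> Rk K l x \<le> n \<and> nullity K l \<rho> x \<le> A (Rk K l x)"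
      using Rkle Age by simp
    show "\<And>t. t \<le> n \<Longrightarrow> \<exists>x\<in>Lat K l ns. Rk K l x = t \<and> nullity K l \<rho> x = A t" by (rule Aatt)
  qed
  define B where "B t = k + t + A (n - t) - n" for t
  have Bge: "k + t + A (n - t) \<ge> n" if "t \<le> n" for t
    using Asub[of "n - t" n] that An kn by simp
  define JB where "JB = {t \<in> {1..n}. B t = Suc (B (t - 1))}"
  have Bn: "B n = k" unfolding B_def using A0 by simp
  have G2: "gen_weight K l ns (dual_rank K l ns \<rho>) ` {1..k} = JB"
    unfolding gw_eq JB_def Bn[symmetric]
  proof (rule gw_generic[where a = B])
    show "B 0 = 0" unfolding B_def using An kn by simp
    show "B t \<le> B (Suc t) \<and> B (Suc t) \<le> Suc (B t)" if t: "t < n" for t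
    proof -
      have s: "A (n - Suc t) \<le> A (n - t) \<and> A (n - t) \<le> Suc (A (n - Suc t))"
        using Astep[of "n - Suc t"] t by (simp add: Suc_diff_Suc)
      have b1: "k + t + A (n - t) \<ge> n" using Bge[of t] t by simp
      have b2: "k + Suc t + A (n - Suc t) \<ge> n" using Bge[of "Suc t"] t by simp
      have "B t \<le> B (Suc t)" unfolding B_def using s b1 b2 by linarith
      moreover have "B (Suc t) \<le> Suc (B t)" unfolding B_def using s b1 b2 by linarith
      ultimately show ?thesis by simp
    qed
    show "Rk K l x \<le> n \<and> nullity K l (dual_rank K l ns \<rho>) x \<le> B (Rk K l x)"
      if x: "x \<in> Lat K l ns" for x
    proof -
      define t where "t = Rk K l x"
      define M where "M = lperp K l ns x"
      have M: "M \<in> Lat K l ns" "Rk K l M + t = n" using lp[OF x] unfolding M_def t_def by auto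
      have tn: "t \<le> n" using Rkle[OF x] t_def by simp
      have RM: "Rk K l M = n - t" using M(2) by simp
      have nM: "(n - t) - \<rho> M \<le> A (n - t)" using Age[OF M(1)] RM unfolding nullity_def by simp
      have b: "k + t + A (n - t) \<ge> n" using Bge[OF tn] .
      have "nullity K l (dual_rank K l ns \<rho>) x = t - (\<rho> M + t - k)"
        unfolding nullity_def dual_rank_def M_def t_def k_def by simp
      also have "\<dots> \<le> B t" unfolding B_def using nM b tn by linarith
      finally show ?thesis using tn t_def by simp
    qed
    show "\<exists>x\<in>Lat K l ns. Rk K l x = t \<and> nullity K l (dual_rank K l ns \<rho>) x = B t"
      if tn: "t \<le> n" for t
    proof -
      obtain M where M: "M \<in> Lat K l ns" "Rk K l M = n - t" "nullity K l \<rho> M = A (n - t)"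
        using Aatt[of "n - t"] by auto
      define L where "L = lperp K l ns M"
      have L: "L \<in> Lat K l ns" "Rk K l L + Rk K l M = n" "lperp K l ns L = M"
        using lp[OF M(1)] unfolding L_def by auto
      have RL: "Rk K l L = t" using L(2) M(2) tn by simp
      have rM: "\<rho> M \<le> n - t" using R1'[OF M(1)] M(2) by simp
      have x1: "\<rho> M + A (n - t) = n - t" using M(3) rM M(2) unfolding nullity_def by simp
      have x2: "A (n - t) \<le> n - k" using Amono[of "n - t" n] An by simp
      have b: "k + t + A (n - t) \<ge> n" using Bge[OF tn] .
      have "nullity K l (dual_rank K l ns \<rho>) L = t - (\<rho> M + t - k)"
        unfolding nullity_def dual_rank_def using L(3) RL k_def by simp
      also have "\<dots> = B t" unfolding B_def using x1 x2 b tn kn by linarith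
      finally show ?thesis using L(1) RL by blast
    qed
  qed
  have key: "t \<in> JB \<longleftrightarrow> n + 1 - t \<notin> JA" if t: "t \<in> {1..n}" for t
  proof -
    define s where "s = n - t"
    have s1: "n + 1 - t = Suc s" "Suc s - 1 = s" "t - 1 = n - Suc s" using t unfolding s_def by auto
    have sn: "s < n" using t unfolding s_def by auto
    have st: "A s \<le> A (Suc s) \<and> A (Suc s) \<le> Suc (A s)" by (rule Astep[OF sn])
    have b1: "k + t + A s \<ge> n" using Bge[of t] t unfolding s_def by simp
    have nt1: "n - (t - 1) = Suc s" using t unfolding s_def by auto
    have b2: "k + (t - 1) + A (Suc s) \<ge> n" using Bge[of "t - 1"] t nt1 by simp
    have tt: "t = n - s" "t \<ge> 1" using t unfolding s_def by auto
    have "t \<in> JB \<longleftrightarrow> B t = Suc (B (t - 1))" unfolding JB_def using t by simp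
    also have "\<dots> \<longleftrightarrow> A s = A (Suc s)"
    proof -
      have e1: "B t = k + t + A s - n" unfolding B_def s_def by simp
      have "n - (t - 1) = Suc s" using t unfolding s_def by auto
      then have e2: "B (t - 1) = k + (t - 1) + A (Suc s) - n" unfolding B_def by simp
      show ?thesis
      proof
        assume "B t = Suc (B (t - 1))"
        then show "A s = A (Suc s)" using e1 e2 b1 b2 st tt(2) by linarith
      next
        assume "A s = A (Suc s)"
        then show "B t = Suc (B (t - 1))" using e1 e2 b1 b2 st tt(2) by linarith
      qed
    qed
    also have "\<dots> \<longleftrightarrow> n + 1 - t \<notin> JA"
    proof -
      have "Suc s \<in> {1..n}" using sn by simp
      then have j: "n + 1 - t \<in> JA \<longleftrightarrow> A (Suc s) = Suc (A s)"
        unfolding JA_def s1(1) by simp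
      show ?thesis
      proof
        assume "A s = A (Suc s)"
        then show "n + 1 - t \<notin> JA" using j by simp
      next
        assume "n + 1 - t \<notin> JA"
        then have "A (Suc s) \<noteq> Suc (A s)" using j by simp
        then show "A s = A (Suc s)" using st by linarith
      qed
    qed
    finally show ?thesis .
  qed
  have img: "(\<lambda>i. n + 1 - gen_weight K l ns \<rho> i) ` {1..n - k} = (\<lambda>t. n + 1 - t) ` JA"
  proof -
    have "(\<lambda>i. n + 1 - gen_weight K l ns \<rho> i) ` {1..n - k} = (\<lambda>t. n + 1 - t) ` (gen_weight K l ns \<rho> ` {1..n - k})"
      by (simp add: image_image)
    then show ?thesis using G1 by simp
  qed
  have JAsub: "JA \<subseteq> {1..n}" unfolding JA_def by auto
  have JBsub: "JB \<subseteq> {1..n}" unfolding JB_def by auto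
  have U: "{1..n} = JB \<union> (\<lambda>t. n + 1 - t) ` JA"
  proof (intro equalityI subsetI)
    fix x assume x: "x \<in> {1..n}"
    show "x \<in> JB \<union> (\<lambda>t. n + 1 - t) ` JA"
    proof (cases "x \<in> JB")
      case False
      then have "n + 1 - x \<in> JA" using key[OF x] by simp
      moreover have "x = n + 1 - (n + 1 - x)" using x by auto
      ultimately show ?thesis by blast
    qed simp
  next
    fix x assume x: "x \<in> JB \<union> (\<lambda>t. n + 1 - t) ` JA"
    show "x \<in> {1..n}"
    proof (cases "x \<in> JB")
      case True
      then show ?thesis using JBsub by blast
    next
      case False
      then obtain s where s: "s \<in> JA" "x = n + 1 - s" using x by blast
      have "s \<in> {1..n}" using subsetD[OF JAsub s(1)] .
      then show ?thesis using s(2) by auto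
    qed
  qed
  have D: "JB \<inter> (\<lambda>t. n + 1 - t) ` JA = {}"
  proof (rule ccontr)
    assume "JB \<inter> (\<lambda>t. n + 1 - t) ` JA \<noteq> {}"
    then obtain s where s: "s \<in> JA" "n + 1 - s \<in> JB" by blast
    have "s \<in> {1..n}" using s(1) JAsub by auto
    then have "n + 1 - (n + 1 - s) = s" by auto
    then show False using key[of "n + 1 - s"] s JBsub by auto
  qed
  show ?thesis using U D G2 img by simp
qed


end
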